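(* For every $m\geq 0$, the double occurrence words $w$ of length $2m$ (over $m$ symbols, considered up to renaming of symbols) such that the set of sinks of $\vec{\Lambda}(w)$ is a dominating set of $\vec{\Lambda}(w)$ are in bijection with the rooted loopless maps with $m$ edges (up to isomorphism of rooted maps).
   Context: A double occurrence word is a word in which each occurring symbol occurs exactly twice. For such $w$, $\vec\Lambda(w)$ is the directed graph on the symbols of $w$ with an arc $e\to f$ whenever $e\,f\,e\,f$ is a subsequence of $w$. A sink is a vertex with no out-neighbor; a set $D$ of vertices is dominating if every vertex not in $D$ is adjacent (in either direction) to a vertex of $D$. A map is a triple $(B,\sigma,\alpha)$ with $B$ finite, $\sigma,\alpha\in\mathrm{Sym}(B)$, $\alpha$ a fixed-point-free involution, $\langle\sigma,\alpha\rangle$ transitive on $B$; its edges are the cycles of $\alpha$ and vertices the cycles of $\sigma$; it is loopless if no edge is contained in a single cycle of $\sigma$. A rooted map has a distinguished flag $b_\bullet\in B$; two rooted maps are isomorphic if a bijection of flag sets conjugates the respective $\sigma$'s and $\alpha$'s and maps root to root. *)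

theory Defs
  imports "HOL-Library.Sublist" "HOL-Combinatorics.Permutations"
begin

definition dow :: "nat list \<Rightarrow> bool" where
  "dow w \<longleftrightarrow> (\<forall>x \<in> set w. count_list w x = 2)"

definition lam_arc :: "nat list \<Rightarrow> nat \<Rightarrow> nat \<Rightarrow> bool" where
  "lam_arc w e f \<longleftrightarrow> e \<in> set w \<and> f \<in> set w \<and> subseq [e, f, e, f] w"

definition sinks :: "nat list \<Rightarrow> nat set" where
  "sinks w = {v \<in> set w. \<not> (\<exists>u. lam_arc w v u)}"

definition dominating :: "nat list \<Rightarrow> nat set \<Rightarrow> bool" where
  "dominating w D \<longleftrightarrow> D \<subseteq> set w \<and>
     (\<forall>v \<in> set w - D. \<exists>u \<in> D. lam_arc w u v \<or> lam_arc w v u)"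

definition renaming_rel :: "(nat list \<times> nat list) set" where
  "renaming_rel = {(w, v). \<exists>g. inj_on g (set w) \<and> map g w = v}"

definition dow_classes :: "nat \<Rightarrow> nat list set set" where
  "dow_classes m =
     {w. dow w \<and> length w = 2 * m \<and> dominating w (sinks w)} // renaming_rel"

text \<open>A (rooted) map with flags in nat: (B, sigma, alpha, root).  Sym(B) is rendered by
  \<open>permutes\<close> (bijection of the type that is the identity outside B).\<close>

type_synonym rmap = "nat set \<times> (nat \<Rightarrow> nat) \<times> (nat \<Rightarrow> nat) \<times> nat"

definition cyc :: "(nat \<Rightarrow> nat) \<Rightarrow> nat \<Rightarrow> nat set" where
  "cyc p b = {(p ^^ n) b | n. True}"

definition is_map :: "nat set \<Rightarrow> (nat \<Rightarrow> nat) \<Rightarrow> (nat \<Rightarrow> nat) \<Rightarrow> bool" where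
  "is_map B \<sigma> \<alpha> \<longleftrightarrow> finite B \<and> \<sigma> permutes B \<and> \<alpha> permutes B \<and>
     (\<forall>b \<in> B. \<alpha> b \<noteq> b \<and> \<alpha> (\<alpha> b) = b) \<and>
     (\<forall>b \<in> B. \<forall>c \<in> B.
        (\<lambda>x y. y = \<sigma> x \<or> x = \<sigma> y \<or> y = \<alpha> x \<or> x = \<alpha> y)\<^sup>*\<^sup>* b c)"

definition map_edges :: "nat set \<Rightarrow> (nat \<Rightarrow> nat) \<Rightarrow> nat set set" where
  "map_edges B \<alpha> = cyc \<alpha> ` B"

definition map_vertices :: "nat set \<Rightarrow> (nat \<Rightarrow> nat) \<Rightarrow> nat set set" where
  "map_vertices B \<sigma> = cyc \<sigma> ` B"

definition loopless :: "nat set \<Rightarrow> (nat \<Rightarrow> nat) \<Rightarrow> (nat \<Rightarrow> nat) \<Rightarrow> bool" where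
  "loopless B \<sigma> \<alpha> \<longleftrightarrow> (\<forall>e \<in> map_edges B \<alpha>. \<forall>v \<in> map_vertices B \<sigma>. \<not> e \<subseteq> v)"

definition rooted_loopless_maps :: "nat \<Rightarrow> rmap set" where
  "rooted_loopless_maps m = {(B, \<sigma>, \<alpha>, r). is_map B \<sigma> \<alpha> \<and> r \<in> B \<and>
      loopless B \<sigma> \<alpha> \<and> card (map_edges B \<alpha>) = m}"

definition rmap_iso :: "(rmap \<times> rmap) set" where
  "rmap_iso = {((B, \<sigma>, \<alpha>, r), (B', \<sigma>', \<alpha>', r')). \<exists>\<phi>. bij_betw \<phi> B B' \<and>
      (\<forall>b \<in> B. \<phi> (\<sigma> b) = \<sigma>' (\<phi> b) \<and> \<phi> (\<alpha> b) = \<alpha>' (\<phi> b)) \<and> \<phi> r = r'}"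

definition rooted_loopless_map_classes :: "nat \<Rightarrow> rmap set set" where
  "rooted_loopless_map_classes m = rooted_loopless_maps m // rmap_iso"

end

theory Submission
  imports Defs "HOL-Combinatorics.Orbits"
begin


section \<open>Positions in double occurrence words\<close>

lemma count_list_filter: "count_list w x = length (filter (\<lambda>y. y = x) w)"
  by (induct w) auto

lemma dow_card:
  assumes "dow w" "i < length w"
  shows "card {j. j < length w \<and> w!j = w!i} = 2"
proof -
  have "count_list w (w!i) = 2" using assms unfolding dow_def by auto
  then show ?thesis unfolding count_list_filter length_filter_conv_card by simp
qed

lemma dow_partner:
  assumes "dow w" "i < length w"
  shows "\<exists>!j. j < length w \<and> j \<noteq> i \<and> w!j = w!i"
proof -
  obtain x y where xy: "{j. j < length w \<and> w!j = w!i} = {x,y}" "x \<noteq> y"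
    using dow_card[OF assms] unfolding card_2_iff by blast
  have "i \<in> {x,y}" using xy(1) assms(2) by blast
  then obtain z where z: "{x,y} = {i,z}" "z \<noteq> i" using xy(2) by blast
  have "z < length w \<and> z \<noteq> i \<and> w!z = w!i" using xy(1) z by blast
  moreover have "j = z" if "j < length w \<and> j \<noteq> i \<and> w!j = w!i" for j
    using that xy(1) z(1) by blast
  ultimately show ?thesis by blast
qed

definition pa :: "nat list \<Rightarrow> nat \<Rightarrow> nat" where
  "pa w i = (THE j. j < length w \<and> j \<noteq> i \<and> w!j = w!i)"

lemma pa:
  assumes "dow w" "i < length w"
  shows "pa w i < length w" "pa w i \<noteq> i" "w!(pa w i) = w!i"
  using theI'[OF dow_partner[OF assms]] unfolding pa_def by auto

lemma pa_unique:
  assumes "dow w" "i < length w" "j < length w" "j \<noteq> i" "w!j = w!i"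
  shows "pa w i = j"
  using the1_equality[OF dow_partner[OF assms(1,2)]] assms unfolding pa_def by auto

lemma pa_pa:
  assumes "dow w" "i < length w"
  shows "pa w (pa w i) = i"
  using pa[OF assms] pa_unique[OF assms(1) pa(1)[OF assms] assms(2)] by metis

lemma same_letter:
  assumes "dow w" "i < length w" "j < length w" "w!j = w!i"
  shows "j = i \<or> j = pa w i"
  using pa_unique[OF assms(1,2,3) _ assms(4)] by auto

definition lo :: "nat list \<Rightarrow> nat \<Rightarrow> nat" where
  "lo w i = min i (pa w i)"

definition cross :: "nat list \<Rightarrow> nat \<Rightarrow> nat \<Rightarrow> bool" where
  "cross w i j \<longleftrightarrow> i < j \<and> j < pa w i \<and> pa w i < pa w j"

lemma subseq_Cons_nth:
  "subseq (x#xs) ys \<longleftrightarrow> (\<exists>i<length ys. ys!i = x \<and> subseq xs (drop (Suc i) ys))"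
proof (induct ys)
  case Nil then show ?case by simp
next
  case (Cons y ys)
  show ?case
  proof
    assume "subseq (x#xs) (y#ys)"
    then consider "x = y" "subseq xs ys" | "subseq (x#xs) ys"
      by (auto split: if_splits)
    then show "\<exists>i<length (y#ys). (y#ys)!i = x \<and> subseq xs (drop (Suc i) (y#ys))"
    proof cases
      case 1 then show ?thesis by (intro exI[of _ 0]) auto
    next
      case 2
      then obtain i where "i<length ys" "ys!i = x" "subseq xs (drop (Suc i) ys)" using Cons by auto
      then show ?thesis by (intro exI[of _ "Suc i"]) auto
    qed
  next
    assume "\<exists>i<length (y#ys). (y#ys)!i = x \<and> subseq xs (drop (Suc i) (y#ys))"
    then obtain i where i: "i<length (y#ys)" "(y#ys)!i = x" "subseq xs (drop (Suc i) (y#ys))" by blast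
    show "subseq (x#xs) (y#ys)"
    proof (cases i)
      case 0 then show ?thesis using i by auto
    next
      case (Suc k)
      then have "subseq (x#xs) ys" using Cons i by auto
      then show ?thesis by (rule list_emb_Cons)
    qed
  qed
qed

lemma subseq_Cons_drop:
  "subseq (x#xs) (drop k ys) \<longleftrightarrow> (\<exists>i. k \<le> i \<and> i<length ys \<and> ys!i = x \<and> subseq xs (drop (Suc i) ys))"
proof -
  have "subseq (x#xs) (drop k ys) \<longleftrightarrow> (\<exists>i<length ys - k. ys!(k+i) = x \<and> subseq xs (drop (Suc (k+i)) ys))"
    unfolding subseq_Cons_nth by (auto simp: add.commute nth_drop less_diff_conv)
  also have "\<dots> \<longleftrightarrow> (\<exists>i. k \<le> i \<and> i<length ys \<and> ys!i = x \<and> subseq xs (drop (Suc i) ys))"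
  proof
    assume "\<exists>i<length ys - k. ys!(k+i) = x \<and> subseq xs (drop (Suc (k+i)) ys)"
    then obtain i where "i<length ys - k" "ys!(k+i) = x" "subseq xs (drop (Suc (k+i)) ys)" by blast
    then show "\<exists>i. k \<le> i \<and> i<length ys \<and> ys!i = x \<and> subseq xs (drop (Suc i) ys)"
      by (intro exI[of _ "k+i"]) auto
  next
    assume "\<exists>i. k \<le> i \<and> i<length ys \<and> ys!i = x \<and> subseq xs (drop (Suc i) ys)"
    then obtain i where "k \<le> i" "i<length ys" "ys!i = x" "subseq xs (drop (Suc i) ys)" by blast
    then show "\<exists>i<length ys - k. ys!(k+i) = x \<and> subseq xs (drop (Suc (k+i)) ys)"
      by (intro exI[of _ "i-k"]) auto
  qed
  finally show ?thesis .
qed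

lemma subseq4:
  "subseq [a,b,c,d] ys \<longleftrightarrow> (\<exists>i j k l. i<j \<and> j<k \<and> k<l \<and> l<length ys \<and>
      ys!i = a \<and> ys!j = b \<and> ys!k = c \<and> ys!l = d)"
proof -
  have "subseq [a,b,c,d] ys = subseq [a,b,c,d] (drop 0 ys)" by simp
  also have "\<dots> \<longleftrightarrow> (\<exists>i j k l. i<j \<and> j<k \<and> k<l \<and> l<length ys \<and>
      ys!i = a \<and> ys!j = b \<and> ys!k = c \<and> ys!l = d)"
    unfolding subseq_Cons_drop Suc_le_eq
    apply (rule iffI)
     apply (elim exE conjE)
     apply (intro exI conjI; assumption)
    apply (elim exE conjE)
    subgoal for i j k l
      apply (rule exI[of _ i], simp)
      apply (rule exI[of _ j], simp)
      apply (rule exI[of _ k], simp)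
      apply (rule exI[of _ l], simp)
      done
    done
  finally show ?thesis .
qed

section \<open>Arcs and sinks at the level of positions\<close>

lemma lo_props:
  assumes "dow w" "i < length w"
  shows "lo w i < length w" "w!(lo w i) = w!i" "lo w i < pa w (lo w i)" "lo w i = i \<or> lo w i = pa w i"
  using pa[OF assms] pa_pa[OF assms] unfolding lo_def by (auto simp: min_def)

lemma cross_lo:
  assumes "dow w" "a < length w" "cross w a b"
  shows "lo w a = a" "lo w b = b" "b < length w" "pa w a < length w" "pa w b < length w"
proof -
  have b: "b < length w" using assms pa[OF assms(1,2)] unfolding cross_def by auto
  show "lo w a = a" "lo w b = b" "b < length w" "pa w a < length w" "pa w b < length w"
    using assms b pa[OF assms(1,2)] pa[OF assms(1) b] unfolding cross_def lo_def by auto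
qed

lemma lo_eqI:
  assumes "dow w" "i < length w" "a < length w" "w!a = w!i" "a < pa w a"
  shows "lo w i = a"
proof -
  have "a = i \<or> a = pa w i" using same_letter[OF assms(1,2,3,4)] .
  then show ?thesis
    using assms pa_pa[OF assms(1,2)] pa[OF assms(1,2)] unfolding lo_def by (auto simp: min_def)
qed

lemma arc_pos:
  assumes "dow w" "i < length w" "j < length w"
  shows "lam_arc w (w!i) (w!j) \<longleftrightarrow> cross w (lo w i) (lo w j)"
proof
  assume "lam_arc w (w!i) (w!j)"
  then obtain a b c d where abcd: "a<b" "b<c" "c<d" "d<length w" "w!a = w!i" "w!b = w!j" "w!c = w!i" "w!d = w!j"
    unfolding lam_arc_def subseq4 by blast
  have c: "c = pa w a" using pa_unique[OF assms(1), of a c] abcd by auto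
  have d: "d = pa w b" using pa_unique[OF assms(1), of b d] abcd by auto
  have "lo w i = a" using lo_eqI[OF assms(1,2), of a] abcd c by auto
  moreover have "lo w j = b" using lo_eqI[OF assms(1,3), of b] abcd d by auto
  ultimately show "cross w (lo w i) (lo w j)" using abcd c d unfolding cross_def by auto
next
  assume cr: "cross w (lo w i) (lo w j)"
  have "subseq [w!i, w!j, w!i, w!j] w"
    unfolding subseq4
    apply (rule exI[of _ "lo w i"], rule exI[of _ "lo w j"], rule exI[of _ "pa w (lo w i)"], rule exI[of _ "pa w (lo w j)"])
    using cr lo_props[OF assms(1,2)] lo_props[OF assms(1,3)] pa[OF assms(1) lo_props(1)[OF assms(1,2)]]
      pa[OF assms(1) lo_props(1)[OF assms(1,3)]]
    unfolding cross_def by auto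
  then show "lam_arc w (w!i) (w!j)" unfolding lam_arc_def using assms by auto
qed

abbreviation sk :: "nat list \<Rightarrow> nat \<Rightarrow> bool" where
  "sk w i \<equiv> w!i \<in> sinks w"

lemma sk_char:
  assumes "dow w" "i < length w"
  shows "sk w i \<longleftrightarrow> \<not> (\<exists>j<length w. cross w (lo w i) j)"
proof -
  have "sk w i \<longleftrightarrow> \<not> (\<exists>j<length w. lam_arc w (w!i) (w!j))"
    unfolding sinks_def using assms by (auto simp: lam_arc_def in_set_conv_nth)
  also have "\<dots> \<longleftrightarrow> \<not> (\<exists>j<length w. cross w (lo w i) (lo w j))"
    using arc_pos[OF assms] by auto
  also have "\<dots> \<longleftrightarrow> \<not> (\<exists>j<length w. cross w (lo w i) j)"
    using cross_lo[OF assms(1) lo_props(1)[OF assms]] by metis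
  finally show ?thesis .
qed

lemma sk_pa:
  assumes "dow w" "i < length w"
  shows "sk w (pa w i) = sk w i"
  using pa[OF assms] by simp

definition good :: "nat list \<Rightarrow> bool" where
  "good w \<longleftrightarrow> dow w \<and> dominating w (sinks w)"

lemma good_iff:
  assumes "dow w"
  shows "good w \<longleftrightarrow> (\<forall>i<length w. sk w i \<or>
     (\<exists>j<length w. sk w j \<and> (cross w (lo w j) (lo w i) \<or> cross w (lo w i) (lo w j))))"
proof -
  have "dominating w (sinks w) \<longleftrightarrow> (\<forall>i<length w. sk w i \<or>
     (\<exists>j<length w. sk w j \<and> (lam_arc w (w!j) (w!i) \<or> lam_arc w (w!i) (w!j))))"
  proof
    assume d: "dominating w (sinks w)"
    show "\<forall>i<length w. sk w i \<or>
     (\<exists>j<length w. sk w j \<and> (lam_arc w (w!j) (w!i) \<or> lam_arc w (w!i) (w!j)))"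
    proof (intro allI impI)
      fix i assume i: "i < length w"
      show "sk w i \<or> (\<exists>j<length w. sk w j \<and> (lam_arc w (w!j) (w!i) \<or> lam_arc w (w!i) (w!j)))"
      proof (cases "sk w i")
        case False
        then have "w!i \<in> set w - sinks w" using i by auto
        then obtain u where u: "u \<in> sinks w" "lam_arc w u (w!i) \<or> lam_arc w (w!i) u"
          using d unfolding dominating_def by blast
        then obtain j where "j < length w" "w!j = u" unfolding sinks_def by (auto simp: in_set_conv_nth)
        then show ?thesis using u by blast
      qed simp
    qed
  next
    assume d: "\<forall>i<length w. sk w i \<or>
     (\<exists>j<length w. sk w j \<and> (lam_arc w (w!j) (w!i) \<or> lam_arc w (w!i) (w!j)))"
    have "sinks w \<subseteq> set w" unfolding sinks_def by auto
    moreover have "\<exists>u\<in>sinks w. lam_arc w u v \<or> lam_arc w v u" if "v \<in> set w - sinks w" for v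
    proof -
      have "v \<in> set w" using that by blast
      then obtain i where i: "i < length w" "w!i = v" by (auto simp: in_set_conv_nth)
      then have "\<not> sk w i" using that by auto
      then obtain j where "j<length w" "sk w j" "lam_arc w (w!j) (w!i) \<or> lam_arc w (w!i) (w!j)"
        using d i by blast
      then show ?thesis using i by blast
    qed
    ultimately show "dominating w (sinks w)" unfolding dominating_def by blast
  qed
  then show ?thesis unfolding good_def using assms arc_pos[OF assms] by auto
qed


section \<open>The map of a word\<close>

definition nx :: "nat \<Rightarrow> nat \<Rightarrow> nat" where
  "nx n i = (if Suc i = n then 0 else Suc i)"

definition sw :: "nat list \<Rightarrow> nat \<Rightarrow> nat" where
  "sw w i = (if sk w i then pa w i else i)"

definition sg :: "nat list \<Rightarrow> nat \<Rightarrow> nat" where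
  "sg w i = (if i < length w then nx (length w) (sw w i) else i)"

definition al :: "nat list \<Rightarrow> nat \<Rightarrow> nat" where
  "al w i = (if i < length w then pa w i else i)"

lemma sw_props:
  assumes "dow w" "i < length w"
  shows "sw w i < length w" "sw w (sw w i) = i" "sw w i = i \<or> sw w i = pa w i"
  using assms pa[OF assms] pa_pa[OF assms] sk_pa[OF assms] unfolding sw_def by auto

lemma sg_lt: assumes "dow w" "i < length w" shows "sg w i < length w"
  using sw_props[OF assms] assms unfolding sg_def nx_def by auto

lemma al_lt: assumes "dow w" "i < length w" shows "al w i < length w"
  using pa[OF assms] assms unfolding al_def by auto

lemma nx_inj: "a < n \<Longrightarrow> b < n \<Longrightarrow> nx n a = nx n b \<Longrightarrow> a = b"
  by (auto simp: nx_def split: if_splits)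

lemma pa_inj:
  assumes "dow w" "p < length w" "q < length w" "pa w p = pa w q"
  shows "p = q"
  using pa_pa[OF assms(1,2)] pa_pa[OF assms(1,3)] assms(4) by metis

lemma pa_eq_iff:
  assumes "dow w" "p < length w" "x < length w"
  shows "pa w p = x \<longleftrightarrow> p = pa w x"
  using pa_pa[OF assms(1,2)] pa_pa[OF assms(1,3)] by auto

lemma sg_inj:
  assumes "dow w" "i < length w" "j < length w" "sg w i = sg w j"
  shows "i = j"
proof -
  have "sw w i = sw w j"
    using assms sw_props[OF assms(1,2)] sw_props[OF assms(1,3)] nx_inj unfolding sg_def
    by auto
  then show ?thesis using sw_props(2)[OF assms(1,2)] sw_props(2)[OF assms(1,3)] by metis
qed

lemma sg_sw: assumes "dow w" "i < length w" shows "sg w (sw w i) = nx (length w) i"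
  using sw_props[OF assms] unfolding sg_def by auto

lemma sg_permutes:
  assumes "dow w"
  shows "sg w permutes {0..<length w}"
proof (rule bij_imp_permutes)
  have "inj_on (sg w) {0..<length w}" using sg_inj[OF assms] by (auto simp: inj_on_def)
  moreover have "sg w ` {0..<length w} \<subseteq> {0..<length w}" using sg_lt[OF assms] by auto
  ultimately show "bij_betw (sg w) {0..<length w} {0..<length w}"
    using endo_inj_surj[of "{0..<length w}"] unfolding bij_betw_def by auto
next
  show "x \<notin> {0..<length w} \<Longrightarrow> sg w x = x" for x unfolding sg_def by auto
qed

lemma al_permutes:
  assumes "dow w"
  shows "al w permutes {0..<length w}"
proof (rule bij_imp_permutes)
  have "inj_on (al w) {0..<length w}" using pa_pa[OF assms] pa_inj[OF assms] unfolding al_def inj_on_def by auto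
  moreover have "al w ` {0..<length w} \<subseteq> {0..<length w}" using al_lt[OF assms] by auto
  ultimately show "bij_betw (al w) {0..<length w} {0..<length w}"
    using endo_inj_surj[of "{0..<length w}"] unfolding bij_betw_def by auto
next
  show "x \<notin> {0..<length w} \<Longrightarrow> al w x = x" for x unfolding al_def by auto
qed

lemma rtranclp_sym:
  assumes "\<And>x y. R x y \<Longrightarrow> R y x" "R\<^sup>*\<^sup>* a b"
  shows "R\<^sup>*\<^sup>* b a"
  using assms(2)
proof (induct rule: rtranclp_induct)
  case base then show ?case by simp
next
  case (step y z)
  show ?case by (rule converse_rtranclp_into_rtranclp[OF assms(1)[OF step(2)] step(3)])
qed

definition adjr :: "('a \<Rightarrow> 'a) \<Rightarrow> ('a \<Rightarrow> 'a) \<Rightarrow> 'a \<Rightarrow> 'a \<Rightarrow> bool" where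
  "adjr s a x y \<longleftrightarrow> y = s x \<or> x = s y \<or> y = a x \<or> x = a y"

lemma adjr_sym: "adjr s a x y \<Longrightarrow> adjr s a y x"
  unfolding adjr_def by auto

lemma adjr_rtr_sym: "(adjr s a)\<^sup>*\<^sup>* x y \<Longrightarrow> (adjr s a)\<^sup>*\<^sup>* y x"
  by (rule rtranclp_sym[OF adjr_sym])

lemma is_map_alt:
  "is_map B s a \<longleftrightarrow> finite B \<and> s permutes B \<and> a permutes B \<and>
     (\<forall>b \<in> B. a b \<noteq> b \<and> a (a b) = b) \<and> (\<forall>b \<in> B. \<forall>c \<in> B. (adjr s a)\<^sup>*\<^sup>* b c)"
proof -
  have "adjr s a = (\<lambda>x y. y = s x \<or> x = s y \<or> y = a x \<or> x = a y)"
    by (intro ext) (simp add: adjr_def)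
  then show ?thesis unfolding is_map_def by simp
qed

lemma Mw_connected:
  assumes "dow w" "b < length w" "c < length w"
  shows "(adjr (sg w) (al w))\<^sup>*\<^sup>* b c"
proof -
  let ?R = "adjr (sg w) (al w)"
  have z: "?R\<^sup>*\<^sup>* 0 i" if "i < length w" for i
    using that
  proof (induct i)
    case 0 then show ?case by simp
  next
    case (Suc i)
    then have i: "i < length w" by simp
    have "?R\<^sup>*\<^sup>* i (sw w i)"
    proof (cases "sw w i = i")
      case False
      then have "sw w i = al w i" using sw_props(3)[OF assms(1) i] i unfolding al_def by auto
      then have "?R i (sw w i)" unfolding adjr_def by auto
      then show ?thesis by blast
    qed simp
    moreover have "?R (sw w i) (Suc i)"
      using sg_sw[OF assms(1) i] Suc(2) unfolding nx_def adjr_def by auto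
    ultimately have "?R\<^sup>*\<^sup>* i (Suc i)" by (rule rtranclp.rtrancl_into_rtrancl)
    then show ?case using Suc(1)[OF i] by (rule rtranclp_trans[rotated])
  qed
  have "?R\<^sup>*\<^sup>* b 0" using adjr_rtr_sym[OF z[OF assms(2)]] .
  then show ?thesis using z[OF assms(3)] by (rule rtranclp_trans)
qed

section \<open>Vertices of the word map\<close>

definition SS :: "nat list \<Rightarrow> nat \<Rightarrow> bool" where
  "SS w p \<longleftrightarrow> p < length w \<and> sk w p \<and> p < pa w p"

definition vtx :: "nat list \<Rightarrow> nat \<Rightarrow> nat set" where
  "vtx w x = {p. SS w p \<and> p < x \<and> x \<le> pa w p}"

lemma laminar:
  assumes "dow w" "SS w p" "SS w p'" "p < p'" "p' < pa w p"
  shows "pa w p' < pa w p"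
proof -
  have lp: "lo w p = p" using assms(2) unfolding SS_def lo_def by auto
  have p: "p < length w" using assms(2) unfolding SS_def by auto
  have p': "p' < length w" using assms(3) unfolding SS_def by auto
  have "pa w p' \<noteq> pa w p" using pa_inj[OF assms(1) p p'] assms(4) by auto
  moreover have "\<not> cross w p p'" using assms(2) sk_char[OF assms(1) p] lp p' unfolding SS_def by auto
  ultimately show ?thesis using assms(4,5) unfolding cross_def by auto
qed

lemma vtx_sg_mem:
  assumes "dow w" "x < length w" "SS w p"
  shows "(p < sg w x \<and> sg w x \<le> pa w p) \<longleftrightarrow> (p < x \<and> x \<le> pa w p)"
proof -
  let ?n = "length w"
  have p: "p < ?n" "sk w p" "p < pa w p" "pa w p < ?n" using assms(3) pa[OF assms(1)] unfolding SS_def by auto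
  have skpp: "sk w (pa w p)" using sk_pa[OF assms(1) p(1)] p by simp
  have q: "pa w x < ?n" "pa w x \<noteq> x" "pa w (pa w x) = x" using pa[OF assms(1,2)] pa_pa[OF assms(1,2)] by auto
  have ppp: "pa w (pa w p) = p" using pa_pa[OF assms(1) p(1)] .
  consider (A) "\<not> sk w x" "Suc x < ?n" | (B) "\<not> sk w x" "Suc x = ?n"
    | (C) "sk w x" "x < pa w x" "Suc (pa w x) < ?n" | (D) "sk w x" "x < pa w x" "Suc (pa w x) = ?n"
    | (E) "sk w x" "pa w x < x"
    using assms(2) q by linarith
  then show ?thesis
  proof cases
    case A
    then have "sg w x = Suc x" unfolding sg_def sw_def nx_def using assms(2) by auto
    moreover have "p \<noteq> x" "pa w p \<noteq> x" using A p skpp by auto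
    ultimately show ?thesis by auto
  next
    case B
    then have "sg w x = 0" unfolding sg_def sw_def nx_def using assms(2) by auto
    moreover have "pa w p \<noteq> x" using B skpp by auto
    ultimately show ?thesis using B p by auto
  next
    case C
    then have sgx: "sg w x = Suc (pa w x)" unfolding sg_def sw_def nx_def using assms(2) by auto
    have Sx: "SS w x" using C assms(2) unfolding SS_def by auto
    show ?thesis
    proof (cases "p = x")
      case True then show ?thesis using sgx by auto
    next
      case False
      have "pa w p \<noteq> x" using pa_eq_iff[OF assms(1) p(1) assms(2)] C p by auto
      have "p \<noteq> pa w x" using pa_eq_iff[OF assms(1) assms(2) p(1)] q C p by auto
      show ?thesis
      proof
        assume h: "p < sg w x \<and> sg w x \<le> pa w p"
        have "\<not> (x < p)"
        proof
          assume "x < p"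
          then have "pa w p < pa w x" using laminar[OF assms(1) Sx assms(3)] h sgx \<open>p \<noteq> pa w x\<close> by auto
          then show False using h sgx by auto
        qed
        then show "p < x \<and> x \<le> pa w p" using h sgx False C by auto
      next
        assume h: "p < x \<and> x \<le> pa w p"
        then have "pa w x < pa w p" using laminar[OF assms(1) assms(3) Sx] \<open>pa w p \<noteq> x\<close> by auto
        then show "p < sg w x \<and> sg w x \<le> pa w p" using h sgx C by auto
      qed
    qed
  next
    case D
    then have sgx: "sg w x = 0" unfolding sg_def sw_def nx_def using assms(2) by auto
    have Sx: "SS w x" using D assms(2) unfolding SS_def by auto
    have "\<not> (p < x \<and> x \<le> pa w p)"
    proof
      assume h: "p < x \<and> x \<le> pa w p"
      have "pa w p \<noteq> x" using pa_eq_iff[OF assms(1) p(1) assms(2)] D p h by auto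
      then have "pa w x < pa w p" using laminar[OF assms(1) assms(3) Sx] h by auto
      then show False using D p by auto
    qed
    then show ?thesis using sgx by auto
  next
    case E
    let ?q = "pa w x"
    have sgx: "sg w x = Suc ?q" unfolding sg_def sw_def nx_def using assms(2) E by auto
    have Sq: "SS w ?q" using E q sk_pa[OF assms(1,2)] unfolding SS_def by auto
    show ?thesis
    proof (cases "p = ?q")
      case True then show ?thesis using sgx q E by auto
    next
      case False
      have "pa w p \<noteq> x" using pa_eq_iff[OF assms(1) p(1) assms(2)] False by auto
      show ?thesis
      proof
        assume h: "p < sg w x \<and> sg w x \<le> pa w p"
        then have "p < ?q" using sgx False by auto
        then have "pa w ?q < pa w p" using laminar[OF assms(1) assms(3) Sq] h sgx by auto
        then show "p < x \<and> x \<le> pa w p" using q \<open>p < ?q\<close> E by auto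
      next
        assume h: "p < x \<and> x \<le> pa w p"
        have "\<not> (?q < p)"
        proof
          assume "?q < p"
          then have "pa w p < pa w ?q" using laminar[OF assms(1) Sq assms(3)] h q by auto
          then show False using h q by auto
        qed
        then show "p < sg w x \<and> sg w x \<le> pa w p" using h sgx False q \<open>pa w p \<noteq> x\<close> E by auto
      qed
    qed
  qed
qed

lemma vtx_sg:
  assumes "dow w" "x < length w"
  shows "vtx w (sg w x) = vtx w x"
  using vtx_sg_mem[OF assms] unfolding vtx_def by blast

lemma vtx_funpow:
  assumes "dow w" "x < length w"
  shows "vtx w ((sg w ^^ k) x) = vtx w x \<and> (sg w ^^ k) x < length w"
  by (induct k) (auto simp: vtx_sg[OF assms(1)] sg_lt[OF assms(1)] assms)

lemma vtx_pa:
  assumes "good w" "x < length w"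
  shows "vtx w (pa w x) \<noteq> vtx w x"
proof -
  have dw: "dow w" using assms unfolding good_def by auto
  have key: "vtx w (pa w a) \<noteq> vtx w a" if a: "a < length w" "a < pa w a" for a
  proof (cases "sk w a")
    case True
    then have "SS w a" using a unfolding SS_def by auto
    then have "a \<in> vtx w (pa w a)" "a \<notin> vtx w a" unfolding vtx_def using a by auto
    then show ?thesis by blast
  next
    case False
    have la: "lo w a = a" using a unfolding lo_def by auto
    obtain j where j: "j < length w" "sk w j" "cross w (lo w j) a \<or> cross w a (lo w j)"
      using False a(1) assms(1) good_iff[OF dw] la by metis
    let ?p = "lo w j"
    have Sp: "SS w ?p" using lo_props[OF dw j(1)] j(2) unfolding SS_def by auto
    from j(3) show ?thesis
    proof
      assume "cross w ?p a"
      then have "?p \<in> vtx w a" "?p \<notin> vtx w (pa w a)" using Sp unfolding vtx_def cross_def by auto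
      then show ?thesis by blast
    next
      assume "cross w a ?p"
      then have "?p \<notin> vtx w a" "?p \<in> vtx w (pa w a)" using Sp unfolding vtx_def cross_def by auto
      then show ?thesis by blast
    qed
  qed
  show ?thesis
  proof (cases "x < pa w x")
    case True then show ?thesis using key assms(2) by auto
  next
    case False
    then have "pa w x < x" using pa(2)[OF dw assms(2)] by auto
    then show ?thesis using key[of "pa w x"] pa_pa[OF dw assms(2)] pa(1)[OF dw assms(2)] by metis
  qed
qed


lemma cyc_next:
  fixes f :: "nat \<Rightarrow> nat" and C :: "nat set"
  assumes fin: "finite C" and cl: "\<And>y. y \<in> C \<Longrightarrow> f y \<in> C"
    and up: "\<And>y z. y \<in> C \<Longrightarrow> z \<in> C \<Longrightarrow> y < z \<Longrightarrow> y < f y \<and> (\<forall>z\<in>C. y < z \<longrightarrow> f y \<le> z)"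
    and wrap: "\<And>y. y \<in> C \<Longrightarrow> (\<forall>z\<in>C. z \<le> y) \<Longrightarrow> (\<forall>z\<in>C. f y \<le> z)"
    and x: "x \<in> C" and z: "z \<in> C"
  shows "\<exists>k. (f ^^ k) x = z"
proof -
  define M where "M = Max C"
  have MC: "M \<in> C" using Max_in[OF fin] x unfolding M_def by auto
  have Mmax: "c \<le> M" if "c \<in> C" for c using fin that unfolding M_def by auto
  have toM: "\<exists>k. (f ^^ k) y = M" if "y \<in> C" for y
    using that
  proof (induct "M - y" arbitrary: y rule: less_induct)
    case less
    show ?case
    proof (cases "y = M")
      case True then show ?thesis by (intro exI[of _ 0]) simp
    next
      case False
      then have "y < M" using Mmax[OF less(2)] by auto
      then have "y < f y" using up[OF less(2) MC] by auto
      moreover have "f y \<in> C" using cl[OF less(2)] .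
      moreover have "f y \<le> M" using Mmax[OF cl[OF less(2)]] .
      ultimately have "M - f y < M - y" by linarith
      then obtain k where "(f ^^ k) (f y) = M" using less(1)[of "f y"] \<open>f y \<in> C\<close> by blast
      then have "(f ^^ Suc k) y = M" by (simp add: funpow_Suc_right del: funpow.simps)
      then show ?thesis by blast
    qed
  qed
  define m0 where "m0 = f M"
  have m0C: "m0 \<in> C" using cl[OF MC] unfolding m0_def .
  have m0min: "m0 \<le> c" if "c \<in> C" for c using wrap[OF MC] Mmax that unfolding m0_def by auto
  have fromm0: "\<exists>k. (f ^^ k) m0 = z" if "z \<in> C" for z
    using that
  proof (induct z rule: less_induct)
    case (less z)
    show ?case
    proof (cases "z = m0")
      case True then show ?thesis by (intro exI[of _ 0]) simp
    next
      case False
      then have "m0 < z" using m0min[OF less(2)] by auto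
      define L where "L = {c \<in> C. c < z}"
      have Lne: "m0 \<in> L" using m0C \<open>m0 < z\<close> unfolding L_def by auto
      have finL: "finite L" using fin unfolding L_def by auto
      define y where "y = Max L"
      have yL: "y \<in> L" using Lne Max_in[OF finL] unfolding y_def by auto
      have ymax: "c \<le> y" if "c \<in> L" for c using finL that unfolding y_def by auto
      have yC: "y \<in> C" and yz: "y < z" using yL unfolding L_def by auto
      have fy: "y < f y" "f y \<le> z" using up[OF yC less(2) yz] less(2) yz by auto
      have "f y = z"
      proof (rule ccontr)
        assume "f y \<noteq> z"
        then have "f y \<in> L" using fy cl[OF yC] unfolding L_def by auto
        then show False using ymax fy by fastforce
      qed
      obtain k where "(f ^^ k) m0 = y" using less(1)[OF yz yC] by blast
      then have "(f ^^ Suc k) m0 = z" using \<open>f y = z\<close> by simp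
      then show ?thesis by blast
    qed
  qed
  obtain k1 where k1: "(f ^^ k1) x = M" using toM[OF x] by blast
  obtain k2 where k2: "(f ^^ k2) m0 = z" using fromm0[OF z] by blast
  have "(f ^^ (k2 + Suc k1)) x = (f ^^ k2) (f ((f ^^ k1) x))"
    by (simp only: funpow_add o_apply funpow.simps)
  then have "(f ^^ (k2 + Suc k1)) x = z"
    using k1 k2 unfolding m0_def by (simp only:)
  then show ?thesis by blast
qed

lemma vtx_zero: "vtx w 0 = {}" unfolding vtx_def by auto

lemma class_cyc:
  assumes "dow w" "x < length w"
  shows "cyc (sg w) x = {y. y < length w \<and> vtx w y = vtx w x}"
proof
  show "cyc (sg w) x \<subseteq> {y. y < length w \<and> vtx w y = vtx w x}"
    unfolding cyc_def using vtx_funpow[OF assms] by auto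
next
  let ?C = "{y. y < length w \<and> vtx w y = vtx w x}"
  let ?n = "length w"
  have cl: "sg w y \<in> ?C" if "y \<in> ?C" for y
    using that vtx_sg[OF assms(1)] sg_lt[OF assms(1)] by auto
  have inS: "SS w y \<Longrightarrow> z \<in> ?C \<Longrightarrow> y \<in> vtx w z \<Longrightarrow> y \<in> vtx w x" for y z by auto
  have both: "(\<forall>z\<in>?C. y < z \<longrightarrow> y < sg w y \<and> sg w y \<le> z) \<and> ((\<forall>z\<in>?C. z \<le> y) \<longrightarrow> (\<forall>z\<in>?C. sg w y \<le> z))"
    if yC: "y \<in> ?C" for y
  proof -
    have y: "y < ?n" using yC by auto
    have q: "pa w y < ?n" "pa w y \<noteq> y" "pa w (pa w y) = y" using pa[OF assms(1) y] pa_pa[OF assms(1) y] by auto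
    have sgC: "sg w y \<in> ?C" using cl[OF yC] .
    consider (A) "\<not> sk w y" "Suc y < ?n" | (B) "\<not> sk w y" "Suc y = ?n"
      | (C) "sk w y" "y < pa w y" "Suc (pa w y) < ?n" | (D) "sk w y" "y < pa w y" "Suc (pa w y) = ?n"
      | (E) "sk w y" "pa w y < y"
      using y q by linarith
    then show ?thesis
    proof cases
      case A
      then have sgy: "sg w y = Suc y" unfolding sg_def sw_def nx_def using y by auto
      have c2: "(\<forall>z\<in>?C. z \<le> y) \<longrightarrow> (\<forall>z\<in>?C. sg w y \<le> z)"
      proof
        assume "\<forall>z\<in>?C. z \<le> y"
        then have "sg w y \<le> y" using sgC by blast
        then show "\<forall>z\<in>?C. sg w y \<le> z" using sgy by simp
      qed
      show ?thesis using c2 sgy by simp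
    next
      case B
      then have sgy: "sg w y = 0" unfolding sg_def sw_def nx_def using y by auto
      have "\<not> (y < z)" if "z \<in> ?C" for z using that B by auto
      then show ?thesis using sgy by simp
    next
      case C
      then have sgy: "sg w y = Suc (pa w y)" unfolding sg_def sw_def nx_def using y by auto
      have Sy: "SS w y" using C y unfolding SS_def by auto
      have gt: "pa w y < z" if "z \<in> ?C" "y < z" for z
      proof (rule ccontr)
        assume "\<not> pa w y < z"
        then have "y \<in> vtx w z" using Sy that(2) unfolding vtx_def by auto
        moreover have "y \<notin> vtx w y" unfolding vtx_def by auto
        ultimately show False using that yC by auto
      qed
      have c2: "(\<forall>z\<in>?C. z \<le> y) \<longrightarrow> (\<forall>z\<in>?C. sg w y \<le> z)"
      proof
        assume "\<forall>z\<in>?C. z \<le> y"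
        then have "sg w y \<le> y" using sgC by blast
        then show "\<forall>z\<in>?C. sg w y \<le> z" using sgy C by simp
      qed
      have c1: "\<forall>z\<in>?C. y < z \<longrightarrow> y < sg w y \<and> sg w y \<le> z"
        using gt sgy C by (simp add: Suc_le_eq)
      show ?thesis using c1 c2 by blast
    next
      case D
      then have sgy: "sg w y = 0" unfolding sg_def sw_def nx_def using y by auto
      have Sy: "SS w y" using D y unfolding SS_def by auto
      have gt: "pa w y < z" if "z \<in> ?C" "y < z" for z
      proof (rule ccontr)
        assume "\<not> pa w y < z"
        then have "y \<in> vtx w z" using Sy that(2) unfolding vtx_def by auto
        moreover have "y \<notin> vtx w y" unfolding vtx_def by auto
        ultimately show False using that yC by auto
      qed
      have "\<not> (y < z)" if "z \<in> ?C" for z using gt[OF that] that D by auto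
      then show ?thesis using sgy by simp
    next
      case E
      let ?q = "pa w y"
      have sgy: "sg w y = Suc ?q" unfolding sg_def sw_def nx_def using y E by auto
      have Sq: "SS w ?q" using E q sk_pa[OF assms(1) y] unfolding SS_def by auto
      have qv: "?q \<in> vtx w z" if "z \<in> ?C" for z
      proof -
        have "?q \<in> vtx w y" using Sq E q unfolding vtx_def by auto
        then show ?thesis using that yC by auto
      qed
      have "z \<le> y" if "z \<in> ?C" for z using qv[OF that] q unfolding vtx_def by auto
      moreover have "Suc ?q \<le> z" if "z \<in> ?C" for z using qv[OF that] unfolding vtx_def by auto
      ultimately have "\<not> y < z" "Suc ?q \<le> z" if "z \<in> ?C" for z using that by (auto simp: not_less)
      then show ?thesis using sgy by simp
    qed
  qed
  show "?C \<subseteq> cyc (sg w) x"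
  proof
    fix z assume z: "z \<in> ?C"
    have "\<exists>k. (sg w ^^ k) x = z"
    proof (rule cyc_next[of ?C])
      show "finite ?C" by auto
      show "\<And>y. y \<in> ?C \<Longrightarrow> sg w y \<in> ?C" using cl .
      show "\<And>y z. y \<in> ?C \<Longrightarrow> z \<in> ?C \<Longrightarrow> y < z \<Longrightarrow> y < sg w y \<and> (\<forall>z\<in>?C. y < z \<longrightarrow> sg w y \<le> z)"
        using both by blast
      show "\<And>y. y \<in> ?C \<Longrightarrow> (\<forall>z\<in>?C. z \<le> y) \<Longrightarrow> (\<forall>z\<in>?C. sg w y \<le> z)"
        using both by blast
      show "x \<in> ?C" using assms by auto
      show "z \<in> ?C" using z .
    qed
    then show "z \<in> cyc (sg w) x" unfolding cyc_def by auto
  qed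
qed


lemma funpow_invol:
  assumes "a (a b) = b"
  shows "(a ^^ n) b = (if even n then b else a b)"
  by (induct n) (auto simp: assms)

lemma cyc_invol:
  assumes "a (a b) = b"
  shows "cyc a b = {b, a b}"
proof
  show "cyc a b \<subseteq> {b, a b}" unfolding cyc_def using funpow_invol[of a b, OF assms] by auto
  have "(a ^^ 0) b = b" "(a ^^ 1) b = a b" by auto
  then show "{b, a b} \<subseteq> cyc a b" unfolding cyc_def by (metis (mono_tags, lifting) empty_subsetI insert_subset mem_Collect_eq)
qed

lemma edges_card:
  assumes "finite B" "\<forall>b\<in>B. a b \<noteq> b \<and> a (a b) = b" "\<forall>b\<in>B. a b \<in> B"
  shows "card (map_edges B a) * 2 = card B"
proof -
  have e: "cyc a b = {b, a b}" if "b \<in> B" for b using cyc_invol assms(2) that by auto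
  have ai: "x = y" if "x \<in> B" "y \<in> B" "a x = a y" for x y using assms(2) that by metis
  have U: "\<Union>(map_edges B a) = B" unfolding map_edges_def using e assms(3) by auto
  have "2 * card (map_edges B a) = card (\<Union>(map_edges B a))"
  proof (rule card_partition)
    show "finite (map_edges B a)" unfolding map_edges_def using assms(1) by auto
    show "finite (\<Union>(map_edges B a))" using U assms(1) by simp
    show "\<And>c. c \<in> map_edges B a \<Longrightarrow> card c = 2"
      unfolding map_edges_def using e assms(2) by auto
    show "\<And>c1 c2. c1 \<in> map_edges B a \<Longrightarrow> c2 \<in> map_edges B a \<Longrightarrow> c1 \<noteq> c2 \<Longrightarrow> c1 \<inter> c2 = {}"
      unfolding map_edges_def using e assms(2) ai by auto
  qed
  then show ?thesis using U by simp
qed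

lemma good_dow: "good w \<Longrightarrow> dow w" unfolding good_def by auto

lemma Mw_is_map:
  assumes "good w"
  shows "is_map {0..<length w} (sg w) (al w)"
  unfolding is_map_alt
  using sg_permutes[OF good_dow[OF assms]] al_permutes[OF good_dow[OF assms]]
    Mw_connected[OF good_dow[OF assms]] pa[OF good_dow[OF assms]] pa_pa[OF good_dow[OF assms]]
  unfolding al_def by auto

lemma Mw_loopless:
  assumes "good w"
  shows "loopless {0..<length w} (sg w) (al w)"
  unfolding loopless_def
proof (intro ballI)
  have dw: "dow w" using good_dow[OF assms(1)] .
  fix e v assume e: "e \<in> map_edges {0..<length w} (al w)" and v: "v \<in> map_vertices {0..<length w} (sg w)"
  obtain b where b: "b < length w" "e = cyc (al w) b" using e unfolding map_edges_def by auto
  obtain c where c: "c < length w" "v = cyc (sg w) c" using v unfolding map_vertices_def by auto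
  have "al w (al w b) = b" using pa_pa[OF dw b(1)] pa[OF dw b(1)] b unfolding al_def by auto
  then have e2: "e = {b, pa w b}" using b cyc_invol unfolding al_def by auto
  show "\<not> e \<subseteq> v"
  proof
    assume "e \<subseteq> v"
    then have "b \<in> cyc (sg w) c" "pa w b \<in> cyc (sg w) c" using e2 c by auto
    then have "vtx w b = vtx w c" "vtx w (pa w b) = vtx w c" using class_cyc[OF dw c(1)] by auto
    then show False using vtx_pa[OF assms b(1)] by auto
  qed
qed

lemma Mw_edges:
  assumes "good w"
  shows "card (map_edges {0..<length w} (al w)) * 2 = length w"
proof -
  have dw: "dow w" using good_dow[OF assms(1)] .
  show ?thesis
    using edges_card[of "{0..<length w}" "al w"] pa[OF dw] pa_pa[OF dw] unfolding al_def by auto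
qed

section \<open>Recovering the word from the map\<close>

lemma crit1:
  assumes "good w" "k < length w" "sk w k"
  shows "(pa w k = 0 \<or> Suc k \<le> pa w k) \<or> (\<forall>y\<in>cyc (sg w) k. y \<noteq> 0 \<and> y \<le> k)"
proof (cases "k < pa w k")
  case True then show ?thesis by auto
next
  case False
  have dw: "dow w" using good_dow[OF assms(1)] .
  let ?p = "pa w k"
  have p: "?p < k" using False pa(2)[OF dw assms(2)] by auto
  have Sp: "SS w ?p" using p pa[OF dw assms(2)] pa_pa[OF dw assms(2)] sk_pa[OF dw assms(2)] assms(3)
    unfolding SS_def by auto
  have pv: "?p \<in> vtx w k" using Sp p pa_pa[OF dw assms(2)] unfolding vtx_def by auto
  have "y \<noteq> 0 \<and> y \<le> k" if "y \<in> cyc (sg w) k" for y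
  proof -
    have "vtx w y = vtx w k" using that class_cyc[OF dw assms(2)] by auto
    then have "?p \<in> vtx w y" using pv by simp
    then show ?thesis using pa_pa[OF dw assms(2)] unfolding vtx_def by auto
  qed
  then show ?thesis by auto
qed

lemma crit2:
  assumes "good w" "k < length w" "\<not> sk w k"
  shows "\<exists>y\<in>cyc (sg w) (pa w k). y = 0 \<or> (Suc k \<le> y \<and> y < length w)"
proof -
  have dw: "dow w" using good_dow[OF assms(1)] .
  let ?a = "pa w k"
  have a: "?a < length w" "?a \<noteq> k" "pa w ?a = k" using pa[OF dw assms(2)] pa_pa[OF dw assms(2)] by auto
  have ska: "\<not> sk w ?a" using sk_pa[OF dw assms(2)] assms(3) by simp
  have self: "?a \<in> cyc (sg w) ?a" unfolding cyc_def by (auto intro: exI[of _ 0])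
  show ?thesis
  proof (cases "k < ?a")
    case True then show ?thesis using self a by (intro bexI[of _ "pa w k"]) auto
  next
    case False
    then have ak: "?a < k" using a by auto
    show ?thesis
    proof (cases "vtx w ?a = {}")
      case True
      then have "0 \<in> cyc (sg w) ?a" using class_cyc[OF dw a(1)] vtx_zero a by auto
      then show ?thesis by auto
    next
      case False
      have fin: "finite (vtx w ?a)" unfolding vtx_def SS_def by auto
      define p where "p = Max (vtx w ?a)"
      have pin: "p \<in> vtx w ?a" using Max_in[OF fin False] unfolding p_def .
      have pmax: "p' \<le> p" if "p' \<in> vtx w ?a" for p' using fin that unfolding p_def by auto
      have Sp: "SS w p" "p < ?a" "?a \<le> pa w p" using pin unfolding vtx_def by auto
      have p: "p < length w" "sk w p" "p < pa w p" "pa w p < length w" using Sp(1) pa[OF dw] unfolding SS_def by auto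
      let ?q = "pa w p"
      have skq: "sk w ?q" using sk_pa[OF dw p(1)] p by simp
      have aq: "?a < ?q" using Sp ska skq by (cases "?a = ?q") auto
      have kq: "k \<noteq> ?q" using skq assms(3) by auto
      have "\<not> ?q < k"
      proof
        assume "?q < k"
        then have "cross w p ?a" using Sp aq a unfolding cross_def by auto
        moreover have "lo w p = p" using p unfolding lo_def by auto
        ultimately show False using sk_char[OF dw p(1)] p a by auto
      qed
      then have qk: "k < ?q" using kq by auto
      have vq: "vtx w ?q = vtx w ?a"
      proof -
        have "(p' < ?q \<and> ?q \<le> pa w p') \<longleftrightarrow> (p' < ?a \<and> ?a \<le> pa w p')" if Sp': "SS w p'" for p'
        proof (cases "p' = p")
          case True then show ?thesis using Sp aq by auto
        next
          case False
          have p': "p' < length w" "sk w p'" "p' < pa w p'" using Sp' unfolding SS_def by auto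
          have skq': "sk w (pa w p')" using sk_pa[OF dw p'(1)] p' by simp
          have qne: "pa w p' \<noteq> ?q" using pa_inj[OF dw p'(1) p(1)] False by auto
          show ?thesis
          proof
            assume h: "p' < ?q \<and> ?q \<le> pa w p'"
            have "\<not> p < p'"
            proof
              assume "p < p'"
              then have "pa w p' < pa w p" using laminar[OF dw Sp(1) Sp'] h by auto
              then show False using h by auto
            qed
            then show "p' < ?a \<and> ?a \<le> pa w p'" using False Sp h aq by auto
          next
            assume h: "p' < ?a \<and> ?a \<le> pa w p'"
            then have "p' \<in> vtx w ?a" using Sp' unfolding vtx_def by auto
            then have "p' < p" using pmax False by fastforce
            have "?a \<noteq> pa w p'" using ska skq' by auto
            then have "p < pa w p'" using h Sp by auto
            then have "?q < pa w p'" using laminar[OF dw Sp' Sp(1) \<open>p' < p\<close>] by auto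
            then show "p' < ?q \<and> ?q \<le> pa w p'" using \<open>p' < p\<close> p by auto
          qed
        qed
        then show ?thesis unfolding vtx_def by blast
      qed
      have "?q \<in> cyc (sg w) ?a" using class_cyc[OF dw a(1)] vq p by auto
      then show ?thesis using qk p by (intro bexI[of _ "pa w p"]) auto
    qed
  qed
qed

lemma conj_funpow:
  assumes "\<And>b. b < n \<Longrightarrow> f (s b) = s' (f b)" "\<And>b. b < n \<Longrightarrow> s b < n" "x < n"
  shows "f ((s ^^ k) x) = (s' ^^ k) (f x) \<and> (s ^^ k) x < n"
  by (induct k) (auto simp: assms)

lemma conj_cyc:
  assumes "\<And>b. b < n \<Longrightarrow> f (s b) = s' (f b)" "\<And>b. b < n \<Longrightarrow> s b < n" "x < n"
  shows "f ` cyc s x = cyc s' (f x)"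
proof -
  have "f ((s ^^ k) x) = (s' ^^ k) (f x)" for k using conj_funpow[of n f s s' x, OF assms] by blast
  then show ?thesis unfolding cyc_def by (auto simp: image_def)
qed


lemma last_sk:
  assumes "dow w" "length w = Suc L"
  shows "sk w L"
proof -
  have L: "L < length w" using assms by auto
  have "pa w L < L" using pa[OF assms(1) L] assms(2) by auto
  then have lo: "lo w L = pa w L" unfolding lo_def by auto
  have "\<not> cross w (pa w L) j" for j
  proof
    assume c: "cross w (pa w L) j"
    then have j: "j < L" "L < pa w j" using pa_pa[OF assms(1) L] unfolding cross_def by auto
    then have "pa w j < length w" using pa(1)[OF assms(1)] assms(2) by auto
    then show False using j assms(2) by auto
  qed
  then show ?thesis using sk_char[OF assms(1) L] lo by auto
qed

lemma step_sw:
  assumes dw: "dow w" "dow w'" "length w' = length w"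
    and inj: "inj_on f {0..<length w}" and img: "\<forall>b<length w. f b < length w"
    and cs: "\<forall>b<length w. f (sg w b) = sg w' (f b)"
    and k: "k < length w" and fx: "f (nx (length w) k) = nx (length w) k"
  shows "f (sw w k) = sw w' k"
proof -
  have a: "sg w (sw w k) = nx (length w) k" using sg_sw[OF dw(1) k] .
  have b: "sg w' (sw w' k) = nx (length w) k" using sg_sw[OF dw(2)] k dw(3) by auto
  have swl: "sw w k < length w" using sw_props[OF dw(1) k] by auto
  have swl': "sw w' k < length w" using sw_props[OF dw(2)] k dw(3) by auto
  have "sg w' (f (sw w k)) = sg w' (sw w' k)" using cs swl a b fx by auto
  then show ?thesis using sg_inj[OF dw(2)] img swl swl' dw(3) by auto
qed

lemma inj_core:
  assumes gw: "good w" "good w'" "length w' = length w"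
    and inj: "inj_on f {0..<length w}" and img: "\<forall>b<length w. f b < length w"
    and cs: "\<forall>b<length w. f (sg w b) = sg w' (f b)"
    and ca: "\<forall>b<length w. f (al w b) = al w' (f b)"
    and z: "f 0 = 0"
  shows "\<forall>i<length w. f i = i"
proof (cases "length w")
  case 0 then show ?thesis by auto
next
  case (Suc L)
  let ?n = "length w"
  have dw: "dow w" "dow w'" using gw good_dow by auto
  have Ln: "L < ?n" using Suc by auto
  have al_eq: "al w i = pa w i" "al w' i = pa w' i" if "i < ?n" for i using that gw(3) unfolding al_def by auto
  have fixL: "f L = L"
  proof -
    have "nx ?n L = 0" using Suc unfolding nx_def by auto
    then have "f (sw w L) = sw w' L" using step_sw[OF dw gw(3) inj img cs Ln] z by auto
    moreover have "sk w L" "sk w' L" using last_sk dw Suc gw(3) by auto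
    ultimately have "f (pa w L) = pa w' L" unfolding sw_def by auto
    then have "f (al w (pa w L)) = al w' (pa w' L)" using ca pa(1)[OF dw(1) Ln] al_eq by auto
    moreover have "pa w' L < ?n" using pa(1)[OF dw(2), of L] Ln gw(3) by auto
    ultimately show ?thesis using al_eq pa_pa[OF dw(1) Ln] pa_pa[OF dw(2)] pa[OF dw(1) Ln] Ln gw(3) by auto
  qed
  have stepk: "f k = k" if k1: "1 \<le> k" and kn: "Suc k < ?n"
    and fixV: "\<And>y. y < ?n \<Longrightarrow> y = 0 \<or> Suc k \<le> y \<Longrightarrow> f y = y" for k
  proof -
    have k: "k < ?n" using kn by auto
    have k': "k < length w'" using k gw(3) by auto
    have "nx ?n k = Suc k" using kn unfolding nx_def by auto
    then have st: "f (sw w k) = sw w' k" using step_sw[OF dw gw(3) inj img cs k] fixV[of "Suc k"] kn by auto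
    have pk: "pa w k < ?n" "pa w (pa w k) = k" "pa w k \<noteq> k" using pa[OF dw(1) k] pa_pa[OF dw(1) k] by auto
    have pk': "pa w' k < ?n" "pa w' (pa w' k) = k" "pa w' k \<noteq> k" using pa[OF dw(2) k'] pa_pa[OF dw(2) k'] gw(3) by auto
    have cycw: "f ` cyc (sg w) x = cyc (sg w') (f x)" if "x < ?n" for x
      using conj_cyc[of ?n f "sg w" "sg w'" x] cs sg_lt[OF dw(1)] that by auto
    have injf: "f a = f b \<Longrightarrow> a < ?n \<Longrightarrow> b < ?n \<Longrightarrow> a = b" for a b using inj unfolding inj_on_def by auto
    consider (FF) "\<not> sk w k" "\<not> sk w' k" | (TT) "sk w k" "sk w' k" | (TF) "sk w k" "\<not> sk w' k"
      | (FT) "\<not> sk w k" "sk w' k" by blast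
    then show ?thesis
    proof cases
      case FF then show ?thesis using st unfolding sw_def by auto
    next
      case TT
      then have "f (pa w k) = pa w' k" using st unfolding sw_def by auto
      then have "f (al w (pa w k)) = al w' (pa w' k)" using ca pk al_eq by auto
      then show ?thesis using al_eq pk pk' by auto
    next
      case TF
      then have fp: "f (pa w k) = k" using st unfolding sw_def by auto
      have c1: "(pa w k = 0 \<or> Suc k \<le> pa w k) \<or> (\<forall>y\<in>cyc (sg w) k. y \<noteq> 0 \<and> y \<le> k)"
        using crit1[OF gw(1) k TF(1)] .
      obtain y where y: "y \<in> cyc (sg w') (pa w' k)" "y = 0 \<or> (Suc k \<le> y \<and> y < length w')"
        using crit2[OF gw(2) k' TF(2)] by blast
      show ?thesis
      proof (cases "pa w k = 0 \<or> Suc k \<le> pa w k")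
        case True
        then have "f (pa w k) = pa w k" using fixV pk by auto
        then show ?thesis using fp pk by auto
      next
        case False
        then have all: "\<forall>y\<in>cyc (sg w) k. y \<noteq> 0 \<and> y \<le> k" using c1 by auto
        have "pa w' k = f k"
        proof -
          have "f (al w (pa w k)) = al w' (f (pa w k))" using ca pk by auto
          then show ?thesis using fp al_eq pk k by auto
        qed
        then have "y \<in> f ` cyc (sg w) k" using y(1) cycw[OF k] by auto
        then obtain z where zc: "z \<in> cyc (sg w) k" "f z = y" by auto
        have zn: "z < ?n" using zc(1) class_cyc[OF dw(1) k] by auto
        have yn: "y < ?n" using y(2) gw(3) Suc by auto
        have "f y = y" using fixV[OF yn] y(2) by auto
        then have "z = y" using injf[of z y] zc zn yn by auto
        then show ?thesis using all zc y(2) by auto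
      qed
    next
      case FT
      then have fk: "f k = pa w' k" using st unfolding sw_def by auto
      obtain y where y: "y \<in> cyc (sg w) (pa w k)" "y = 0 \<or> (Suc k \<le> y \<and> y < length w)"
        using crit2[OF gw(1) k FT(1)] by blast
      have c1: "(pa w' k = 0 \<or> Suc k \<le> pa w' k) \<or> (\<forall>y\<in>cyc (sg w') k. y \<noteq> 0 \<and> y \<le> k)"
        using crit1[OF gw(2) k' FT(2)] .
      show ?thesis
      proof (cases "pa w' k = 0 \<or> Suc k \<le> pa w' k")
        case True
        then have "f (pa w' k) = pa w' k" using fixV pk' by auto
        then have "pa w' k = k" using fk injf[of "pa w' k" k] pk' k by auto
        then show ?thesis using pk' by auto
      next
        case False
        then have all: "\<forall>y\<in>cyc (sg w') k. y \<noteq> 0 \<and> y \<le> k" using c1 by auto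
        have "f (pa w k) = k"
        proof -
          have "f (al w k) = al w' (f k)" using ca k by auto
          then show ?thesis using fk al_eq pk pk' k by auto
        qed
        have yn: "y < ?n" using y(2) Suc by auto
        have "f y = y" using fixV[OF yn] y(2) by auto
        moreover have "f y \<in> cyc (sg w') k" using y(1) cycw[OF pk(1)] \<open>f (pa w k) = k\<close> by auto
        ultimately show ?thesis using all y(2) by auto
      qed
    qed
  qed
  have desc: "\<forall>j. L - m \<le> j \<longrightarrow> j < ?n \<longrightarrow> f j = j" if "m \<le> L" for m
    using that
  proof (induct m)
    case 0 then show ?case using fixL Suc by (auto simp: less_Suc_eq)
  next
    case (Suc m)
    then have IH: "\<forall>j. L - m \<le> j \<longrightarrow> j < ?n \<longrightarrow> f j = j" by auto
    let ?k = "L - Suc m"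
    have "f ?k = ?k"
    proof (cases "?k = 0")
      case True then show ?thesis using z by simp
    next
      case False
      show ?thesis
      proof (rule stepk)
        show "1 \<le> ?k" using False by auto
        show "Suc ?k < ?n" using Suc.prems \<open>length w = Suc L\<close> by auto
        show "f y = y" if "y < ?n" "y = 0 \<or> Suc ?k \<le> y" for y
          using that IH z Suc.prems by auto
      qed
    qed
    show ?case
    proof (intro allI impI)
      fix j assume j: "L - Suc m \<le> j" "j < ?n"
      show "f j = j"
      proof (cases "j = ?k")
        case True then show ?thesis using \<open>f ?k = ?k\<close> by simp
      next
        case False
        then have "L - m \<le> j" using j(1) Suc.prems by linarith
        then show ?thesis using IH j(2) by auto
      qed
    qed
  qed
  show ?thesis using desc[of L] Suc by auto
qed


lemma ren_dow:
  assumes "inj_on g (set w)" "dow w"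
  shows "dow (map g w)"
  using assms count_list_inj_map[OF assms(1)] unfolding dow_def by auto

lemma ren_nth_eq:
  assumes "inj_on g (set w)" "i < length w" "j < length w"
  shows "(map g w)!j = (map g w)!i \<longleftrightarrow> w!j = w!i"
  using assms by (auto simp: inj_on_def)

lemma ren_pa:
  assumes "inj_on g (set w)" "dow w" "i < length w"
  shows "pa (map g w) i = pa w i"
  using pa_unique[OF ren_dow[OF assms(1,2)], of i "pa w i"] pa[OF assms(2,3)] assms
    ren_nth_eq[OF assms(1) assms(3) pa(1)[OF assms(2,3)]] by auto

lemma ren_cross:
  assumes "inj_on g (set w)" "dow w" "a < length w"
  shows "cross (map g w) a b = cross w a b"
proof (cases "b < length w")
  case True then show ?thesis using ren_pa[OF assms(1,2)] assms unfolding cross_def by auto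
next
  case False
  have "pa w a < length w" using pa[OF assms(2,3)] by auto
  then show ?thesis using False ren_pa[OF assms] unfolding cross_def by auto
qed

lemma ren_lo:
  assumes "inj_on g (set w)" "dow w" "a < length w"
  shows "lo (map g w) a = lo w a"
  using ren_pa[OF assms] unfolding lo_def by auto

lemma ren_sk:
  assumes "inj_on g (set w)" "dow w" "i < length w"
  shows "sk (map g w) i = sk w i"
proof -
  have l: "lo w i < length w" using lo_props[OF assms(2,3)] by auto
  show ?thesis
    using sk_char[OF assms(2,3)] sk_char[OF ren_dow[OF assms(1,2)], of i] assms(3)
      ren_lo[OF assms] ren_cross[OF assms(1,2) l] by auto
qed

lemma ren_good:
  assumes "inj_on g (set w)" "dow w"
  shows "good (map g w) = good w"
proof -
  have lo: "lo w i < length w" if "i < length w" for i using lo_props[OF assms(2) that] by auto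
  show ?thesis
    using good_iff[OF assms(2)] good_iff[OF ren_dow[OF assms]] ren_sk[OF assms] ren_lo[OF assms]
      ren_cross[OF assms lo] by auto
qed

lemma ren_sg:
  assumes "inj_on g (set w)" "dow w"
  shows "sg (map g w) = sg w"
  using ren_sk[OF assms] ren_pa[OF assms] unfolding sg_def sw_def by (intro ext) auto

lemma ren_al:
  assumes "inj_on g (set w)" "dow w"
  shows "al (map g w) = al w"
  using ren_pa[OF assms] unfolding al_def by (intro ext) auto

lemma ren_relE:
  assumes "(w, v) \<in> renaming_rel"
  obtains g where "inj_on g (set w)" "v = map g w"
  using assms unfolding renaming_rel_def by auto

lemma pa_eq_ren:
  assumes "dow w" "dow v" "length v = length w" "\<forall>i<length w. pa v i = pa w i"
  shows "(w, v) \<in> renaming_rel"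
proof -
  define g where "g x = v ! (SOME i. i < length w \<and> w!i = x)" for x
  have gi: "g (w!i) = v!i" if i: "i < length w" for i
  proof -
    have "\<exists>j. j < length w \<and> w!j = w!i" using i by auto
    then have j: "(SOME j. j < length w \<and> w!j = w!i) < length w \<and> w!(SOME j. j < length w \<and> w!j = w!i) = w!i"
      by (rule someI_ex)
    define j where "j = (SOME j. j < length w \<and> w!j = w!i)"
    have "j = i \<or> j = pa w i" using same_letter[OF assms(1) i] j unfolding j_def by auto
    moreover have "v ! (pa w i) = v!i" using assms(4) pa(3)[OF assms(2)] i assms(3) by auto
    ultimately show ?thesis unfolding g_def j_def[symmetric] by auto
  qed
  have "map g w = v" using gi assms(3) by (intro nth_equalityI) auto
  moreover have "inj_on g (set w)"
  proof (rule inj_onI)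
    fix x y assume "x \<in> set w" "y \<in> set w" "g x = g y"
    then obtain i j where ij: "i < length w" "j < length w" "w!i = x" "w!j = y" "g x = g y"
      by (auto simp: in_set_conv_nth)
    then have "v!j = v!i" using gi by auto
    then have "j = i \<or> j = pa v i" using same_letter[OF assms(2)] ij assms(3) by auto
    then show "x = y" using ij assms(4) pa(3)[OF assms(1) ij(1)] by auto
  qed
  ultimately show ?thesis unfolding renaming_rel_def by auto
qed


lemma embed_pa:
  assumes "dow w" "dow v" "j < length v"
    and h: "\<And>j. j < length v \<Longrightarrow> h j < length w \<and> w!(h j) = g (v!j)"
    and hi: "\<And>a b. a < length v \<Longrightarrow> b < length v \<Longrightarrow> h a = h b \<Longrightarrow> a = b"
  shows "pa w (h j) = h (pa v j)"
proof -
  have p: "pa v j < length v" "pa v j \<noteq> j" "v!(pa v j) = v!j" using pa[OF assms(2,3)] by auto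
  show ?thesis
    using pa_unique[OF assms(1), of "h j" "h (pa v j)"] h[OF assms(3)] h[OF p(1)] p hi[OF p(1) assms(3)] by auto
qed

lemma embed_cross:
  assumes "a < length v" "b < length v"
    and pa: "\<And>j. j < length v \<Longrightarrow> pa w (h j) = h (pa v j)" "\<And>j. j < length v \<Longrightarrow> pa v j < length v"
    and mono: "\<And>x y. x < length v \<Longrightarrow> y < length v \<Longrightarrow> h x < h y \<longleftrightarrow> x < y"
  shows "cross w (h a) (h b) \<longleftrightarrow> cross v a b"
  unfolding cross_def using assms by auto

section \<open>Inserting a new letter\<close>

definition ins :: "nat \<Rightarrow> nat list \<Rightarrow> nat list" where
  "ins k v = [0] @ take k (map Suc v) @ [0] @ drop k (map Suc v)"

definition sh :: "nat \<Rightarrow> nat \<Rightarrow> nat" where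
  "sh k j = (if j < k then Suc j else Suc (Suc j))"

lemma sh_mono: "sh k x < sh k y \<longleftrightarrow> x < y" unfolding sh_def by auto
lemma sh_le: "sh k x \<le> sh k y \<longleftrightarrow> x \<le> y" unfolding sh_def by auto
lemma sh_inj: "sh k x = sh k y \<longleftrightarrow> x = y" unfolding sh_def by auto
lemma sh_ne: "sh k j \<noteq> 0" "sh k j \<noteq> Suc k" unfolding sh_def by auto

context
  fixes k :: nat and v :: "nat list"
  assumes dv: "dow v" and kv: "k \<le> length v"
begin

lemma ins_len: "length (ins k v) = length v + 2"
  unfolding ins_def using kv by auto

lemma ins_nth0: "ins k v ! 0 = 0" unfolding ins_def by simp

lemma ins_nthk: "ins k v ! Suc k = 0" unfolding ins_def using kv by (simp add: nth_append)

lemma ins_nth_sh: "j < length v \<Longrightarrow> ins k v ! sh k j = Suc (v!j)"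
  unfolding ins_def sh_def using kv by (auto simp: nth_append)

lemma sh_lt: "j < length v \<Longrightarrow> sh k j < length v + 2" unfolding sh_def by auto

lemma ins_pos:
  assumes "y < length v + 2"
  shows "y = 0 \<or> y = Suc k \<or> (\<exists>j<length v. y = sh k j)"
proof -
  consider "y = 0" | "y = Suc k" | "0 < y" "y < Suc k" | "Suc k < y" by linarith
  then show ?thesis
  proof cases
    case 3
    then have "y = sh k (y - 1)" "y - 1 < length v" using kv unfolding sh_def by auto
    then show ?thesis by blast
  next
    case 4
    then have "y = sh k (y - 2)" "y - 2 < length v" using kv assms unfolding sh_def by auto
    then show ?thesis by blast
  qed auto
qed

lemma ins_dow: "dow (ins k v)"
proof -
  let ?V = "map Suc v"
  have c: "count_list (take k ?V) x + count_list (drop k ?V) x = count_list ?V x" for x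
    using count_list_append[of "take k ?V" "drop k ?V" x] by simp
  have "count_list (ins k v) x = 2" if "x \<in> set (ins k v)" for x
  proof (cases x)
    case 0
    then have "count_list ?V x = 0" by (auto simp: count_list_0_iff)
    then show ?thesis unfolding ins_def using c[of x] 0 by simp
  next
    case (Suc y)
    have "x \<in> set (take k ?V) \<or> x \<in> set (drop k ?V)" using that Suc unfolding ins_def by auto
    then have "x \<in> set ?V" by (meson in_set_takeD in_set_dropD)
    then have "y \<in> set v" using Suc by auto
    then have "count_list v y = 2" using dv unfolding dow_def by auto
    then have "count_list ?V x = 2" using count_list_map_conv[of Suc v y] Suc by (simp add: inj_def)
    then show ?thesis unfolding ins_def using c[of x] Suc by simp
  qed
  then show ?thesis unfolding dow_def by auto
qed

abbreviation "insw \<equiv> ins k v"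

lemma ins_pa0: "pa insw 0 = Suc k" "pa insw (Suc k) = 0"
proof -
  show "pa insw 0 = Suc k" using pa_unique[OF ins_dow, of 0 "Suc k"] ins_len ins_nth0 ins_nthk kv by auto
  show "pa insw (Suc k) = 0" using pa_unique[OF ins_dow, of "Suc k" 0] ins_len ins_nth0 ins_nthk kv by auto
qed

lemma ins_pa_sh: "j < length v \<Longrightarrow> pa insw (sh k j) = sh k (pa v j)"
  using embed_pa[OF ins_dow dv, of j "sh k" Suc] ins_len sh_lt ins_nth_sh sh_inj by auto

lemma ins_cross_sh:
  assumes "a < length v" "b < length v"
  shows "cross insw (sh k a) (sh k b) \<longleftrightarrow> cross v a b"
  using embed_cross[OF assms, of insw "sh k"] ins_pa_sh pa(1)[OF dv] sh_mono by auto

lemma ins_cross_new: "\<not> cross insw x 0" "\<not> cross insw x (Suc k)"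
  unfolding cross_def using ins_pa0 by auto

lemma ins_lo_sh: "j < length v \<Longrightarrow> lo insw (sh k j) = sh k (lo v j)"
  unfolding lo_def using ins_pa_sh sh_le by (auto simp: min_def)

lemma ins_lo0: "lo insw 0 = 0" "lo insw (Suc k) = 0"
  unfolding lo_def using ins_pa0 by auto

lemma ins_sk_sh:
  assumes j: "j < length v"
  shows "sk insw (sh k j) \<longleftrightarrow> sk v j"
proof -
  have l: "lo v j < length v" using lo_props[OF dv j] by auto
  have shl: "sh k j < length insw" using sh_lt[OF j] ins_len by auto
  have "(\<exists>y<length insw. cross insw (lo insw (sh k j)) y) \<longleftrightarrow> (\<exists>b<length v. cross v (lo v j) b)"
  proof
    assume "\<exists>y<length insw. cross insw (lo insw (sh k j)) y"
    then obtain y where y: "y < length insw" "cross insw (sh k (lo v j)) y" using ins_lo_sh[OF j] by auto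
    then obtain b where "b < length v" "y = sh k b" using ins_pos[of y] ins_len ins_cross_new by auto
    then show "\<exists>b<length v. cross v (lo v j) b" using y ins_cross_sh[OF l] by auto
  next
    assume "\<exists>b<length v. cross v (lo v j) b"
    then obtain b where "b < length v" "cross v (lo v j) b" by auto
    then show "\<exists>y<length insw. cross insw (lo insw (sh k j)) y"
      using ins_cross_sh[OF l] ins_lo_sh[OF j] sh_lt ins_len by (intro exI[of _ "sh k b"]) auto
  qed
  then show ?thesis using sk_char[OF ins_dow shl] sk_char[OF dv j] by simp
qed

lemma ins_cross0:
  assumes "j < length v"
  shows "cross insw 0 (sh k j) \<longleftrightarrow> j < k \<and> k \<le> pa v j"
  unfolding cross_def using ins_pa0 ins_pa_sh[OF assms] unfolding sh_def by auto

lemma ins_sk0: "sk insw 0 \<longleftrightarrow> \<not> (\<exists>j<length v. j < k \<and> k \<le> pa v j)"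
proof -
  have "(\<exists>y<length insw. cross insw 0 y) \<longleftrightarrow> (\<exists>j<length v. j < k \<and> k \<le> pa v j)"
  proof
    assume "\<exists>y<length insw. cross insw 0 y"
    then obtain y where y: "y < length insw" "cross insw 0 y" by auto
    then obtain b where "b < length v" "y = sh k b" using ins_pos[of y] ins_len ins_cross_new by auto
    then show "\<exists>j<length v. j < k \<and> k \<le> pa v j" using y ins_cross0 by auto
  next
    assume "\<exists>j<length v. j < k \<and> k \<le> pa v j"
    then obtain j where "j < length v" "j < k \<and> k \<le> pa v j" by auto
    then show "\<exists>y<length insw. cross insw 0 y" using ins_cross0 sh_lt ins_len by (intro exI[of _ "sh k j"]) auto
  qed
  then show ?thesis using sk_char[OF ins_dow, of 0] ins_len ins_lo0 by auto
qed

lemma ins_skk: "sk insw (Suc k) = sk insw 0"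
  using sk_pa[OF ins_dow, of 0] ins_pa0 ins_len by auto

lemma ins_sw_sh: "j < length v \<Longrightarrow> sw insw (sh k j) = sh k (sw v j)"
  unfolding sw_def using ins_sk_sh ins_pa_sh by auto

lemma ins_sg_sh:
  assumes j: "j < length v"
  shows "sg insw (sh k j) = (if Suc (sw v j) = k then Suc k else if Suc (sw v j) = length v then 0
     else sh k (Suc (sw v j)))"
proof -
  have t: "sw v j < length v" using sw_props[OF dv j] by auto
  have "sg insw (sh k j) = nx (length v + 2) (sh k (sw v j))"
    unfolding sg_def using ins_sw_sh[OF j] sh_lt[OF j] ins_len by auto
  then show ?thesis using t kv unfolding nx_def sh_def by auto
qed

lemma ins_sg0: "sg insw 0 = (if sk insw 0 then (if k = length v then 0 else Suc (Suc k)) else 1)"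
  unfolding sg_def sw_def nx_def using ins_len ins_pa0 by auto

lemma ins_sgk: "sg insw (Suc k) = (if sk insw 0 then 1 else (if k = length v then 0 else Suc (Suc k)))"
  unfolding sg_def sw_def nx_def using ins_len ins_pa0 ins_skk kv by auto

lemma ins_al: "al insw 0 = Suc k" "al insw (Suc k) = 0" "j < length v \<Longrightarrow> al insw (sh k j) = sh k (al v j)"
  unfolding al_def using ins_len ins_pa0 ins_pa_sh kv sh_lt by auto

lemma ins_good:
  assumes gv: "good v" and c: "sk insw 0 \<or> (\<exists>j<length v. sk v j \<and> j < k \<and> k \<le> pa v j)"
  shows "good insw"
proof -
  have L: "length insw = length v + 2" by (rule ins_len)
  have new: "\<exists>j<length insw. sk insw j \<and> (cross insw (lo insw j) (lo insw i) \<or> cross insw (lo insw i) (lo insw j))"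
    if "\<not> sk insw 0" "lo insw i = 0" for i
  proof -
    have "\<exists>j<length v. sk v j \<and> j < k \<and> k \<le> pa v j" using c that(1) by blast
    then obtain j where j: "j < length v" "sk v j" "j < k" "k \<le> pa v j" by blast
    have "lo v j = j" using j unfolding lo_def by auto
    then have "cross insw 0 (lo insw (sh k j))" using ins_cross0[OF j(1)] ins_lo_sh[OF j(1)] j by auto
    then show ?thesis using that j ins_sk_sh sh_lt L by (intro exI[of _ "sh k j"]) auto
  qed
  have "sk insw i \<or> (\<exists>j<length insw. sk insw j \<and> (cross insw (lo insw j) (lo insw i) \<or> cross insw (lo insw i) (lo insw j)))"
    if i: "i < length insw" for i
  proof -
    consider "i = 0" | "i = Suc k" | j where "j < length v" "i = sh k j" using ins_pos[of i] i L by auto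
    then show ?thesis
    proof cases
      case 1 then show ?thesis using new ins_lo0 by auto
    next
      case 2 then show ?thesis using new ins_lo0 ins_skk by auto
    next
      case (3 j)
      show ?thesis
      proof (cases "sk v j")
        case True then show ?thesis using 3 ins_sk_sh by auto
      next
        case False
        then obtain j2 where j2: "j2 < length v" "sk v j2" "cross v (lo v j2) (lo v j) \<or> cross v (lo v j) (lo v j2)"
          using good_iff[OF dv] gv 3(1) by auto
        have l: "lo v j < length v" "lo v j2 < length v" using lo_props[OF dv] j2(1) 3(1) by auto
        have "cross insw (lo insw (sh k j2)) (lo insw i) \<or> cross insw (lo insw i) (lo insw (sh k j2))"
          using j2(3) ins_cross_sh[OF l(1,2)] ins_cross_sh[OF l(2,1)] ins_lo_sh 3 j2(1) by auto
        then show ?thesis using j2 ins_sk_sh sh_lt L by (intro disjI2 exI[of _ "sh k j2"]) auto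
      qed
    qed
  qed
  then show ?thesis using good_iff[OF ins_dow] by auto
qed

end


section \<open>Concatenation of words on disjoint alphabets\<close>

context
  fixes X Y :: "nat list"
  assumes dX: "dow X" and dY: "dow Y" and disj: "set X \<inter> set Y = {}"
begin

lemma cat_dow: "dow (X @ Y)"
proof -
  have "count_list (X @ Y) x = 2" if "x \<in> set (X @ Y)" for x
  proof (cases "x \<in> set X")
    case True
    then have "x \<notin> set Y" using disj by auto
    then show ?thesis using True dX unfolding dow_def by auto
  next
    case False
    then have "x \<in> set Y" using that by auto
    then show ?thesis using False dY unfolding dow_def by auto
  qed
  then show ?thesis unfolding dow_def by auto
qed

lemma cat_paX: "j < length X \<Longrightarrow> pa (X @ Y) j = pa X j"
  using embed_pa[OF cat_dow dX, of j id id] by (auto simp: nth_append)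

lemma cat_paY: "j < length Y \<Longrightarrow> pa (X @ Y) (length X + j) = length X + pa Y j"
  using embed_pa[OF cat_dow dY, of j "\<lambda>j. length X + j" id] by (auto simp: nth_append)

lemma cat_skX:
  assumes j: "j < length X"
  shows "sk (X @ Y) j \<longleftrightarrow> sk X j"
proof -
  have l: "lo X j < length X" using lo_props[OF dX j] by auto
  have lo: "lo (X @ Y) j = lo X j" using cat_paX[OF j] unfolding lo_def by auto
  have paX: "pa X i < length X" if "i < length X" for i using pa[OF dX that] by auto
  have "(\<exists>y<length (X@Y). cross (X@Y) (lo X j) y) \<longleftrightarrow> (\<exists>y<length X. cross X (lo X j) y)"
  proof
    assume "\<exists>y<length (X@Y). cross (X@Y) (lo X j) y"
    then obtain y where y: "cross (X@Y) (lo X j) y" by auto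
    then have "y < length X" using cat_paX[OF l] paX[OF l] unfolding cross_def by auto
    then show "\<exists>y<length X. cross X (lo X j) y" using y cat_paX l unfolding cross_def by auto
  next
    assume "\<exists>y<length X. cross X (lo X j) y"
    then obtain y where y: "y < length X" "cross X (lo X j) y" by auto
    then show "\<exists>y<length (X@Y). cross (X@Y) (lo X j) y" using cat_paX l
      by (intro exI[of _ y]) (auto simp: cross_def)
  qed
  then show ?thesis using sk_char[OF cat_dow, of j] sk_char[OF dX j] j lo by auto
qed

lemma cat_skY:
  assumes j: "j < length Y"
  shows "sk (X @ Y) (length X + j) \<longleftrightarrow> sk Y j"
proof -
  let ?a = "length X"
  have l: "lo Y j < length Y" using lo_props[OF dY j] by auto
  have lo: "lo (X @ Y) (?a + j) = ?a + lo Y j" using cat_paY[OF j] unfolding lo_def by auto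
  have "(\<exists>y<length (X@Y). cross (X@Y) (?a + lo Y j) y) \<longleftrightarrow> (\<exists>y<length Y. cross Y (lo Y j) y)"
  proof
    assume "\<exists>y<length (X@Y). cross (X@Y) (?a + lo Y j) y"
    then obtain y where y: "y < length (X@Y)" "cross (X@Y) (?a + lo Y j) y" by auto
    then have "?a \<le> y" unfolding cross_def by auto
    then obtain b where b: "y = ?a + b" "b < length Y" using y(1) by (metis add.commute le_Suc_ex length_append nat_add_left_cancel_less)
    then show "\<exists>y<length Y. cross Y (lo Y j) y" using y cat_paY l unfolding cross_def by auto
  next
    assume "\<exists>y<length Y. cross Y (lo Y j) y"
    then obtain y where y: "y < length Y" "cross Y (lo Y j) y" by auto
    then show "\<exists>y<length (X@Y). cross (X@Y) (?a + lo Y j) y" using cat_paY l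
      by (intro exI[of _ "?a + y"]) (auto simp: cross_def)
  qed
  then show ?thesis using sk_char[OF cat_dow, of "?a + j"] sk_char[OF dY j] j lo by auto
qed

lemma cat_pos: "y < length (X @ Y) \<Longrightarrow> y < length X \<or> (\<exists>j<length Y. y = length X + j)"
  by (cases "y < length X") (auto intro: exI[of _ "y - length X"])

lemma cat_good:
  assumes "good X" "good Y"
  shows "good (X @ Y)"
proof -
  have "sk (X@Y) i \<or> (\<exists>j<length (X@Y). sk (X@Y) j \<and>
     (cross (X@Y) (lo (X@Y) j) (lo (X@Y) i) \<or> cross (X@Y) (lo (X@Y) i) (lo (X@Y) j)))"
    if i: "i < length (X@Y)" for i
  proof (cases "i < length X")
    case True
    show ?thesis
    proof (cases "sk X i")
      case False
      then obtain j where j: "j < length X" "sk X j" "cross X (lo X j) (lo X i) \<or> cross X (lo X i) (lo X j)"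
        using good_iff[OF dX] assms(1) True by auto
      have l: "lo X i < length X" "lo X j < length X" using lo_props[OF dX] True j(1) by auto
      have lo: "lo (X@Y) i = lo X i" "lo (X@Y) j = lo X j" using cat_paX True j(1) unfolding lo_def by auto
      have "cross (X@Y) (lo X j) (lo X i) \<or> cross (X@Y) (lo X i) (lo X j)"
        using j(3) cat_paX l unfolding cross_def by auto
      then show ?thesis using j cat_skX lo by (intro disjI2 exI[of _ j]) auto
    qed (use True cat_skX in auto)
  next
    case False
    then obtain i' where i': "i' < length Y" "i = length X + i'" using cat_pos[OF i] by auto
    show ?thesis
    proof (cases "sk Y i'")
      case False
      then obtain j where j: "j < length Y" "sk Y j" "cross Y (lo Y j) (lo Y i') \<or> cross Y (lo Y i') (lo Y j)"
        using good_iff[OF dY] assms(2) i' by auto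
      have l: "lo Y i' < length Y" "lo Y j < length Y" using lo_props[OF dY] i' j(1) by auto
      have lo: "lo (X@Y) i = length X + lo Y i'" "lo (X@Y) (length X + j) = length X + lo Y j"
        using cat_paY i' j(1) unfolding lo_def by auto
      have "cross (X@Y) (length X + lo Y j) (length X + lo Y i') \<or> cross (X@Y) (length X + lo Y i') (length X + lo Y j)"
        using j(3) cat_paY l unfolding cross_def by auto
      then show ?thesis using j cat_skY lo i' by (intro disjI2 exI[of _ "length X + j"]) auto
    qed (use i' cat_skY in auto)
  qed
  then show ?thesis using good_iff[OF cat_dow] by auto
qed

lemma cat_swX: "j < length X \<Longrightarrow> sw (X @ Y) j = sw X j"
  unfolding sw_def using cat_skX cat_paX by auto

lemma cat_swY: "j < length Y \<Longrightarrow> sw (X @ Y) (length X + j) = length X + sw Y j"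
  unfolding sw_def using cat_skY cat_paY by auto

end

lemma bridge_word:
  assumes gX: "good X" and gY: "good Y"
  defines "a \<equiv> length X" and "b \<equiv> length Y"
  shows "\<exists>w. good w \<and> length w = a + b + 2 \<and> al w 0 = Suc a \<and> al w (Suc a) = 0 \<and>
     sg w 0 = (if b = 0 then 0 else Suc (Suc a)) \<and> sg w (Suc a) = 1 \<and>
     (\<forall>j<a. al w (Suc j) = Suc (al X j) \<and> sg w (Suc j) = (if sg X j = 0 then Suc a else Suc (sg X j))) \<and>
     (\<forall>j<b. al w (a + 2 + j) = a + 2 + al Y j \<and> sg w (a + 2 + j) = (if sg Y j = 0 then 0 else a + 2 + sg Y j))"
proof -
  define X1 where "X1 = map (\<lambda>x. 2 * x) X"
  define Y1 where "Y1 = map (\<lambda>x. Suc (2 * x)) Y"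
  have iX: "inj_on (\<lambda>x. 2 * x) (set X)" by (auto simp: inj_on_def)
  have iY: "inj_on (\<lambda>x. Suc (2 * x)) (set Y)" by (auto simp: inj_on_def)
  have dX: "dow X" and dY: "dow Y" using gX gY good_dow by auto
  have dX1: "dow X1" "good X1" "sg X1 = sg X" "al X1 = al X" "length X1 = a"
    using ren_dow[OF iX dX] ren_good[OF iX dX] ren_sg[OF iX dX] ren_al[OF iX dX] gX unfolding X1_def a_def by auto
  have dY1: "dow Y1" "good Y1" "sg Y1 = sg Y" "al Y1 = al Y" "length Y1 = b"
    using ren_dow[OF iY dY] ren_good[OF iY dY] ren_sg[OF iY dY] ren_al[OF iY dY] gY unfolding Y1_def b_def by auto
  have disj: "set X1 \<inter> set Y1 = {}" unfolding X1_def Y1_def by auto presburger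
  define c where "c = X1 @ Y1"
  have dc: "dow c" "good c" "length c = a + b" using cat_dow[OF dX1(1) dY1(1) disj] cat_good[OF dX1(1) dY1(1) disj dX1(2) dY1(2)]
    dX1 dY1 unfolding c_def by auto
  have ka: "a \<le> length c" using dc by auto
  define w where "w = ins a c"
  have sk0: "sk w 0"
  proof -
    have "\<not> (j < a \<and> a \<le> pa c j)" if "j < length c" for j
    proof
      assume h: "j < a \<and> a \<le> pa c j"
      then have "pa c j = pa X1 j" using cat_paX[OF dX1(1) dY1(1) disj] dX1 unfolding c_def by auto
      then show False using pa(1)[OF dX1(1)] h dX1 by fastforce
    qed
    then show ?thesis using ins_sk0[OF dc(1) ka] unfolding w_def by auto
  qed
  have gw: "good w" using ins_good[OF dc(1) ka dc(2)] sk0 unfolding w_def by auto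
  have lw: "length w = a + b + 2" using ins_len[OF dc(1) ka] dc unfolding w_def by auto
  have shX: "sh a j = Suc j" if "j < a" for j using that unfolding sh_def by auto
  have shY: "sh a (a + j) = a + 2 + j" for j unfolding sh_def by auto
  have Xpart: "al w (Suc j) = Suc (al X j) \<and> sg w (Suc j) = (if sg X j = 0 then Suc a else Suc (sg X j))"
    if j: "j < a" for j
  proof -
    have jc: "j < length c" using j dc by auto
    have "al c j = pa c j" using jc unfolding al_def by auto
    also have "pa c j = pa X1 j" using cat_paX[OF dX1(1) dY1(1) disj] dX1 j unfolding c_def by auto
    also have "pa X1 j = al X1 j" unfolding al_def using j dX1 by auto
    finally have al1: "al c j = al X j" using dX1 by simp
    have al2: "al X j < a" using al_lt[OF dX] j unfolding a_def by auto
    have "al w (Suc j) = Suc (al X j)" using ins_al(3)[OF dc(1) ka jc] shX[OF j] shX[OF al2] al1 unfolding w_def by auto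
    moreover
    have swj: "sw c j = sw X1 j" using cat_swX[OF dX1(1) dY1(1) disj] j dX1 unfolding c_def by auto
    have t: "sw X1 j < a" using sw_props[OF dX1(1)] j dX1 by auto
    have sgX: "sg X j = nx a (sw X1 j)" using dX1 j unfolding sg_def sw_def by (metis sg_def sw_def)
    have "sg w (Suc j) = (if Suc (sw c j) = a then Suc a else if Suc (sw c j) = length c then 0
       else sh a (Suc (sw c j)))" using ins_sg_sh[OF dc(1) ka jc] shX[OF j] unfolding w_def by auto
    then have "sg w (Suc j) = (if sg X j = 0 then Suc a else Suc (sg X j))"
      using swj t sgX dc shX[of "Suc (sw X1 j)"] unfolding nx_def by auto
    ultimately show ?thesis by auto
  qed
  have Ypart: "al w (a + 2 + j) = a + 2 + al Y j \<and> sg w (a + 2 + j) = (if sg Y j = 0 then 0 else a + 2 + sg Y j)"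
    if j: "j < b" for j
  proof -
    have jc: "a + j < length c" using j dc by auto
    have "al c (a + j) = pa c (a + j)" using jc unfolding al_def by auto
    also have "pa c (a + j) = a + pa Y1 j" using cat_paY[OF dX1(1) dY1(1) disj] dY1 dX1 j unfolding c_def by auto
    also have "pa Y1 j = al Y1 j" unfolding al_def using j dY1 by auto
    finally have al1: "al c (a + j) = a + al Y j" using dY1 by simp
    have "al w (a + 2 + j) = a + 2 + al Y j" using ins_al(3)[OF dc(1) ka jc] shY al1 unfolding w_def by auto
    moreover
    have swj: "sw c (a + j) = a + sw Y1 j" using cat_swY[OF dX1(1) dY1(1) disj] j dY1 dX1 unfolding c_def by auto
    have t: "sw Y1 j < b" using sw_props[OF dY1(1)] j dY1 by auto
    have sgY: "sg Y j = nx b (sw Y1 j)" using dY1 j unfolding sg_def sw_def by (metis sg_def sw_def)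
    have "sg w (a + 2 + j) = (if Suc (sw c (a + j)) = a then Suc a else if Suc (sw c (a + j)) = length c then 0
       else sh a (Suc (sw c (a + j))))" using ins_sg_sh[OF dc(1) ka jc] shY unfolding w_def by auto
    then have "sg w (a + 2 + j) = (if sg Y j = 0 then 0 else a + 2 + sg Y j)"
      using swj t sgY dc shY[of "Suc (sw Y1 j)"] unfolding nx_def by auto
    ultimately show ?thesis by auto
  qed
  have "al w 0 = Suc a" "al w (Suc a) = 0" using ins_al[OF dc(1) ka] unfolding w_def by auto
  moreover have "sg w 0 = (if b = 0 then 0 else Suc (Suc a))" "sg w (Suc a) = 1"
    using ins_sg0[OF dc(1) ka] ins_sgk[OF dc(1) ka] sk0 dc unfolding w_def by auto
  ultimately show ?thesis using gw lw Xpart Ypart by blast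
qed

lemma nonbridge_word:
  assumes gv: "good v" and k: "1 \<le> k" "k < length v" and vk: "vtx v k \<noteq> {}"
  shows "good (ins k v) \<and> length (ins k v) = length v + 2 \<and> al (ins k v) 0 = Suc k \<and> al (ins k v) (Suc k) = 0 \<and>
     sg (ins k v) 0 = 1 \<and> sg (ins k v) (Suc k) = Suc (Suc k) \<and>
     (\<forall>j<length v. al (ins k v) (sh k j) = sh k (al v j) \<and>
        sg (ins k v) (sh k j) = (if sg v j = 0 then 0 else if sg v j = k then Suc k else sh k (sg v j)))"
proof -
  have dv: "dow v" using gv good_dow by auto
  have kv: "k \<le> length v" using k by auto
  obtain p where p: "p \<in> vtx v k" using vk by auto
  then have pp: "p < length v" "sk v p" "p < k" "k \<le> pa v p" unfolding vtx_def SS_def by auto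
  have nsk: "\<not> sk (ins k v) 0" using ins_sk0[OF dv kv] pp by auto
  have g: "good (ins k v)" using ins_good[OF dv kv gv] pp by auto
  have sgsh: "sg (ins k v) (sh k j) = (if sg v j = 0 then 0 else if sg v j = k then Suc k else sh k (sg v j))"
    if j: "j < length v" for j
  proof -
    have t: "sw v j < length v" using sw_props[OF dv j] by auto
    have "sg v j = nx (length v) (sw v j)" unfolding sg_def using j by auto
    then show ?thesis using ins_sg_sh[OF dv kv j] t k unfolding nx_def by auto
  qed
  show ?thesis using g ins_len[OF dv kv] ins_al[OF dv kv] ins_sg0[OF dv kv] ins_sgk[OF dv kv] nsk k sgsh by auto
qed


lemma cyc_self: "x \<in> cyc s x"
  unfolding cyc_def by (auto intro: exI[of _ 0])

lemma cyc_step: "y \<in> cyc s x \<Longrightarrow> s y \<in> cyc s x"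
  unfolding cyc_def by (auto intro: exI[of _ "Suc n" for n])

lemma cyc_trans: "y \<in> cyc s x \<Longrightarrow> z \<in> cyc s y \<Longrightarrow> z \<in> cyc s x"
proof -
  assume "y \<in> cyc s x" "z \<in> cyc s y"
  then obtain n m where "y = (s ^^ n) x" "z = (s ^^ m) y" unfolding cyc_def by auto
  then have "z = (s ^^ (m + n)) x" by (simp add: funpow_add)
  then show ?thesis unfolding cyc_def by auto
qed

lemma cyc_orbit: "permutation s \<Longrightarrow> cyc s x = orbit s x"
  using orbit_altdef_permutation[of s x] unfolding cyc_def by simp

lemma cyc_sym: "permutation s \<Longrightarrow> y \<in> cyc s x \<Longrightarrow> x \<in> cyc s y"
  using cyc_orbit orbit_swap permutation_self_in_orbit by metis

lemma cyc_eq: "permutation s \<Longrightarrow> y \<in> cyc s x \<Longrightarrow> cyc s y = cyc s x"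
  using cyc_trans cyc_sym by blast

lemma cyc_mono:
  assumes "\<And>y. y \<in> cyc s x \<Longrightarrow> t y \<in> cyc s x"
  shows "cyc t x \<subseteq> cyc s x"
proof -
  have "(t ^^ n) x \<in> cyc s x" for n by (induct n) (auto simp: cyc_self assms)
  then show ?thesis unfolding cyc_def by auto
qed

context
  fixes B :: "nat set" and s a :: "nat \<Rightarrow> nat"
  assumes im: "is_map B s a"
begin

lemma mfin: "finite B" using im unfolding is_map_def by auto
lemma mperm: "s permutes B" "a permutes B" using im unfolding is_map_def by auto
lemma minv: "b \<in> B \<Longrightarrow> a b \<noteq> b" "b \<in> B \<Longrightarrow> a (a b) = b" using im unfolding is_map_def by auto
lemma min: "b \<in> B \<Longrightarrow> s b \<in> B" "b \<in> B \<Longrightarrow> a b \<in> B"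
  using mperm permutes_in_image by metis+
lemma mout: "b \<notin> B \<Longrightarrow> s b = b" "b \<notin> B \<Longrightarrow> a b = b"
  using mperm permutes_not_in by metis+
lemma mpermutation: "permutation s" using permutes_imp_permutation[OF mfin mperm(1)] .
lemma msinj: "s x = s y \<Longrightarrow> x = y" using permutes_inj[OF mperm(1)] unfolding inj_def by auto
lemma mainj: "a x = a y \<Longrightarrow> x = y" using permutes_inj[OF mperm(2)] unfolding inj_def by auto
lemma mconn: "b \<in> B \<Longrightarrow> c \<in> B \<Longrightarrow> (adjr s a)\<^sup>*\<^sup>* b c" using im unfolding is_map_alt by auto

lemma noloop:
  assumes "loopless B s a" "b \<in> B"
  shows "a b \<notin> cyc s b"
proof
  assume h: "a b \<in> cyc s b"
  have "cyc a b = {b, a b}" using cyc_invol minv[OF assms(2)] by auto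
  then have "cyc a b \<subseteq> cyc s b" using h cyc_self by auto
  moreover have "cyc a b \<in> map_edges B a" "cyc s b \<in> map_vertices B s"
    unfolding map_edges_def map_vertices_def using assms(2) by auto
  ultimately show False using assms(1) unfolding loopless_def by blast
qed

end

section \<open>Deleting the root edge\<close>

definition delB :: "nat set \<Rightarrow> (nat \<Rightarrow> nat) \<Rightarrow> nat \<Rightarrow> nat set" where
  "delB B a r = B - {r, a r}"

definition dsig :: "nat set \<Rightarrow> (nat \<Rightarrow> nat) \<Rightarrow> (nat \<Rightarrow> nat) \<Rightarrow> nat \<Rightarrow> nat \<Rightarrow> nat" where
  "dsig B s a r x = (if x \<in> delB B a r then (if s x = r then s r else if s x = a r then s (a r) else s x) else x)"

definition restr :: "nat set \<Rightarrow> (nat \<Rightarrow> nat) \<Rightarrow> nat \<Rightarrow> nat" where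
  "restr K f x = (if x \<in> K then f x else x)"

context
  fixes B :: "nat set" and s a :: "nat \<Rightarrow> nat" and r :: nat
  assumes im: "is_map B s a" and lp: "loopless B s a" and rB: "r \<in> B"
begin

abbreviation "B' \<equiv> delB B a r"
abbreviation "s' \<equiv> dsig B s a r"
abbreviation "a' \<equiv> restr B' a"

lemma ar: "a r \<in> B" "a r \<noteq> r" "a (a r) = r" using min[OF im rB] minv[OF im rB] by auto

lemma sr_ne: "s r \<noteq> a r" "s (a r) \<noteq> r"
proof -
  show "s r \<noteq> a r" using noloop[OF im lp rB] cyc_step[OF cyc_self] by metis
  show "s (a r) \<noteq> r" using noloop[OF im lp ar(1)] cyc_step[OF cyc_self] ar by metis
qed

lemma B'_sub: "B' \<subseteq> B" unfolding delB_def by auto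

lemma B'_card: "card B' = card B - 2"
  using ar rB mfin[OF im] unfolding delB_def by (simp add: card_Diff_subset)

lemma s'_in: "x \<in> B' \<Longrightarrow> s' x \<in> B'"
proof -
  assume x: "x \<in> B'"
  then have xB: "x \<in> B" "x \<noteq> r" "x \<noteq> a r" unfolding delB_def by auto
  consider "s x = r" | "s x = a r" | "s x \<noteq> r" "s x \<noteq> a r" by blast
  then show "s' x \<in> B'"
  proof cases
    case 1
    then have "s r \<noteq> r" using xB msinj[OF im, of x r] by auto
    then show ?thesis using 1 x min[OF im rB] sr_ne unfolding dsig_def delB_def by auto
  next
    case 2
    then have "s (a r) \<noteq> a r" using xB msinj[OF im, of x "a r"] by auto
    then show ?thesis using 2 x min[OF im ar(1)] sr_ne ar unfolding dsig_def delB_def by auto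
  next
    case 3
    then show ?thesis using x min[OF im xB(1)] unfolding dsig_def delB_def by auto
  qed
qed

lemma s'_cases:
  assumes x: "x \<in> B'"
  shows "s x = r \<Longrightarrow> s' x = s r" "s x = a r \<Longrightarrow> s' x = s (a r)"
    "s x \<noteq> r \<Longrightarrow> s x \<noteq> a r \<Longrightarrow> s' x = s x"
  using x ar(2) unfolding dsig_def by auto

lemma s'_inj: "x \<in> B' \<Longrightarrow> y \<in> B' \<Longrightarrow> s' x = s' y \<Longrightarrow> x = y"
proof -
  assume x: "x \<in> B'" and y: "y \<in> B'" and e: "s' x = s' y"
  have xr: "x \<noteq> r" "x \<noteq> a r" "y \<noteq> r" "y \<noteq> a r" using x y unfolding delB_def by auto
  have ra: "r \<noteq> a r" using ar(2) by auto
  have sne: "s r \<noteq> s (a r)" using msinj[OF im, of r "a r"] ra by auto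
  have "s x = s y"
  proof (cases "s x = r")
    case True
    then have "s' x = s r" using s'_cases[OF x] by auto
    show ?thesis
    proof (cases "s y = r")
      case False
      show ?thesis
      proof (cases "s y = a r")
        case True
        then have "s' y = s (a r)" using s'_cases[OF y] by auto
        then show ?thesis using e \<open>s' x = s r\<close> sne by auto
      next
        case False
        then have "s' y = s y" using s'_cases[OF y] \<open>s y \<noteq> r\<close> by auto
        then have "s y = s r" using e \<open>s' x = s r\<close> by auto
        then have "y = r" by (rule msinj[OF im])
        then show ?thesis using xr by auto
      qed
    qed (use True in auto)
  next
    case F1: False
    show ?thesis
    proof (cases "s x = a r")
      case True
      then have sx: "s' x = s (a r)" using s'_cases[OF x] by auto
      show ?thesis
      proof (cases "s y = r")
        case True
        then have "s' y = s r" using s'_cases[OF y] by auto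
        then show ?thesis using e sx sne by auto
      next
        case False
        show ?thesis
        proof (cases "s y = a r")
          case False
          then have "s' y = s y" using s'_cases[OF y] \<open>s y \<noteq> r\<close> by auto
          then have "s y = s (a r)" using e sx by auto
          then have "y = a r" by (rule msinj[OF im])
          then show ?thesis using xr by auto
        qed (use True in auto)
      qed
    next
      case False
      then have sx: "s' x = s x" using s'_cases[OF x] F1 by auto
      show ?thesis
      proof (cases "s y = r")
        case True
        then have "s x = s r" using e sx s'_cases[OF y] by auto
        then have "x = r" by (rule msinj[OF im])
        then show ?thesis using xr by auto
      next
        case F2: False
        show ?thesis
        proof (cases "s y = a r")
          case True
          then have "s x = s (a r)" using e sx s'_cases[OF y] by auto
          then have "x = a r" by (rule msinj[OF im])
          then show ?thesis using xr by auto
        next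
          case False
          then show ?thesis using e sx s'_cases[OF y] F2 by auto
        qed
      qed
    qed
  qed
  then show "x = y" by (rule msinj[OF im])
qed

lemma s'_out: "x \<notin> B' \<Longrightarrow> s' x = x" unfolding dsig_def by auto

lemma s'_cyc: "x \<in> B' \<Longrightarrow> s' x \<in> cyc s x"
proof -
  assume x: "x \<in> B'"
  have 1: "s x \<in> cyc s x" by (rule cyc_step[OF cyc_self])
  have 2: "s (s x) \<in> cyc s x" by (rule cyc_step[OF 1])
  have "s' x = s (s x) \<or> s' x = s x" using x unfolding dsig_def by auto
  then show ?thesis using 1 2 by auto
qed

lemma a'_in: "x \<in> B' \<Longrightarrow> a' x \<in> B'"
proof -
  assume x: "x \<in> B'"
  then have xB: "x \<in> B" "x \<noteq> r" "x \<noteq> a r" unfolding delB_def by auto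
  have "a x \<in> B" using min(2)[OF im xB(1)] .
  moreover have "a x \<noteq> r"
  proof -
    have e: "a (a x) = x" by (rule minv(2)[OF im xB(1)])
    show ?thesis
    proof
      assume "a x = r"
      then have "a (a x) = a r" by (rule arg_cong)
      then have "x = a r" by (simp only: e)
      then show False using xB(3) by (rule notE[rotated])
    qed
  qed
  moreover have "a x \<noteq> a r"
  proof
    assume "a x = a r"
    then have "x = r" by (rule mainj[OF im])
    then show False using xB(2) by (rule notE[rotated])
  qed
  ultimately have "a x \<in> B'" unfolding delB_def by blast
  moreover have "a' x = a x" using x unfolding restr_def by simp
  ultimately show ?thesis by simp
qed

lemma a'_inv: "x \<in> B' \<Longrightarrow> a' x \<noteq> x \<and> a' (a' x) = x"
proof -
  assume x: "x \<in> B'"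
  have "a x \<in> B'" using a'_in[OF x] x unfolding restr_def by auto
  then show ?thesis using x minv[OF im] unfolding restr_def delB_def by auto
qed

lemma adj'_in: "x \<in> B' \<Longrightarrow> adjr s' a' x y \<Longrightarrow> y \<in> B'"
proof -
  assume x: "x \<in> B'" and h: "adjr s' a' x y"
  show "y \<in> B'"
  proof (rule ccontr)
    assume y: "y \<notin> B'"
    have "s' y = y" "a' y = y" using y s'_out unfolding restr_def by auto
    moreover have "s' x \<in> B'" "a' x \<in> B'" using s'_in[OF x] a'_in[OF x] by auto
    ultimately show False using h x y unfolding adjr_def by auto
  qed
qed

definition comp :: "nat \<Rightarrow> nat set" where
  "comp x0 = {x. (adjr s' a')\<^sup>*\<^sup>* x0 x}"

lemma comp_sub: "x0 \<in> B' \<Longrightarrow> comp x0 \<subseteq> B'"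
proof
  fix x assume x0: "x0 \<in> B'" and "x \<in> comp x0"
  then have "(adjr s' a')\<^sup>*\<^sup>* x0 x" unfolding comp_def by auto
  then show "x \<in> B'" using x0 by (induct rule: rtranclp_induct) (auto intro: adj'_in)
qed

lemma comp_closed: "x \<in> comp x0 \<Longrightarrow> adjr s' a' x y \<or> adjr s' a' y x \<Longrightarrow> y \<in> comp x0"
proof -
  assume x: "x \<in> comp x0" and h: "adjr s' a' x y \<or> adjr s' a' y x"
  have "adjr s' a' x y"
  proof (cases "adjr s' a' x y")
    case False
    then have "adjr s' a' y x" using h by (simp only: simp_thms)
    then show ?thesis by (rule adjr_sym)
  qed
  moreover have "(adjr s' a')\<^sup>*\<^sup>* x0 x" using x unfolding comp_def by simp
  ultimately have "(adjr s' a')\<^sup>*\<^sup>* x0 y" by (rule rtranclp.rtrancl_into_rtrancl[rotated])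
  then show ?thesis unfolding comp_def by simp
qed

lemma comp_self: "x0 \<in> comp x0" unfolding comp_def by auto

lemma comp_conn: "x \<in> comp x0 \<Longrightarrow> y \<in> comp x0 \<Longrightarrow> (adjr s' a')\<^sup>*\<^sup>* x y"
proof -
  assume "x \<in> comp x0" "y \<in> comp x0"
  then have "(adjr s' a')\<^sup>*\<^sup>* x0 x" "(adjr s' a')\<^sup>*\<^sup>* x0 y"
    unfolding comp_def by auto
  then have "(adjr s' a')\<^sup>*\<^sup>* x x0" "(adjr s' a')\<^sup>*\<^sup>* x0 y"
    using adjr_rtr_sym[of s' a' x0 x] by auto
  then show ?thesis by (rule rtranclp_trans)
qed

lemma comp_eq: "x \<in> comp x0 \<Longrightarrow> comp x = comp x0"
proof -
  assume x: "x \<in> comp x0"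
  have a1: "(adjr s' a')\<^sup>*\<^sup>* x0 x" using x unfolding comp_def by simp
  have a2: "(adjr s' a')\<^sup>*\<^sup>* x x0" using adjr_rtr_sym[OF a1] .
  show ?thesis
  proof
    show "comp x \<subseteq> comp x0" unfolding comp_def using rtranclp_trans[OF a1] by auto
    show "comp x0 \<subseteq> comp x" unfolding comp_def using rtranclp_trans[OF a2] by auto
  qed
qed

definition K1 :: "nat set" where "K1 = (if s r = r then {} else comp (s r))"
definition K2 :: "nat set" where "K2 = (if s (a r) = a r then {} else comp (s (a r)))"

lemma sr_B': "s r \<noteq> r \<Longrightarrow> s r \<in> B'"
proof -
  assume h: "s r \<noteq> r"
  have "s r \<in> B" by (rule min(1)[OF im rB])
  then show ?thesis using h sr_ne(1) unfolding delB_def by blast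
qed

lemma sar_B': "s (a r) \<noteq> a r \<Longrightarrow> s (a r) \<in> B'"
proof -
  assume h: "s (a r) \<noteq> a r"
  have "s (a r) \<in> B" by (rule min(1)[OF im ar(1)])
  then show ?thesis using h sr_ne(2) unfolding delB_def by blast
qed

lemma K_sub: "K1 \<subseteq> B'" "K2 \<subseteq> B'"
proof -
  show "K1 \<subseteq> B'"
  proof (cases "s r = r")
    case False then show ?thesis unfolding K1_def using comp_sub[OF sr_B'[OF False]] by simp
  qed (simp add: K1_def)
  show "K2 \<subseteq> B'"
  proof (cases "s (a r) = a r")
    case False then show ?thesis unfolding K2_def using comp_sub[OF sar_B'[OF False]] by simp
  qed (simp add: K2_def)
qed

lemma adj_B: "y \<in> B \<Longrightarrow> adjr s a y z \<Longrightarrow> z \<in> B"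
proof -
  assume y: "y \<in> B" and h: "adjr s a y z"
  show "z \<in> B"
  proof (rule ccontr)
    assume z: "z \<notin> B"
    then have "s z = z" "a z = z" using mout[OF im] by auto
    moreover have "s y \<in> B" "a y \<in> B" using min[OF im y] by auto
    ultimately show False using h y z unfolding adjr_def by auto
  qed
qed

lemma K1_eq: "s r \<noteq> r \<Longrightarrow> K1 = comp (s r)" unfolding K1_def by simp
lemma K2_eq: "s (a r) \<noteq> a r \<Longrightarrow> K2 = comp (s (a r))" unfolding K2_def by simp

lemma toK1: assumes y: "y \<in> B'" and h: "adjr s a y r" shows "y \<in> K1"
proof -
  have yr: "y \<noteq> r" "y \<noteq> a r" using y unfolding delB_def by auto
  consider "r = s y" | "y = s r" | "r = a y" | "y = a r" using h unfolding adjr_def by blast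
  then show ?thesis
  proof cases
    case 1
    have ne: "s r \<noteq> r"
    proof
      assume "s r = r"
      then have "s y = s r" using 1 by simp
      then show False using msinj[OF im] yr by blast
    qed
    have "s' y = s r" using s'_cases(1)[OF y] 1 by simp
    then have "adjr s' a' y (s r)" unfolding adjr_def by simp
    then have "y \<in> comp (s r)" using comp_closed[OF comp_self] by blast
    then show ?thesis using K1_eq[OF ne] by simp
  next
    case 2
    then have ne: "s r \<noteq> r" using yr by simp
    show ?thesis using comp_self K1_eq[OF ne] 2 by simp
  next
    case 3
    then have "a r = a (a y)" by simp
    also have "a (a y) = y" using minv(2)[OF im] y unfolding delB_def by blast
    finally show ?thesis using yr by simp
  next
    case 4 then show ?thesis using yr by simp
  qed
qed

lemma toK2: assumes y: "y \<in> B'" and h: "adjr s a y (a r)" shows "y \<in> K2"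
proof -
  have yr: "y \<noteq> r" "y \<noteq> a r" using y unfolding delB_def by auto
  consider "a r = s y" | "y = s (a r)" | "a r = a y" | "y = a (a r)" using h unfolding adjr_def by blast
  then show ?thesis
  proof cases
    case 1
    have ne: "s (a r) \<noteq> a r"
    proof
      assume "s (a r) = a r"
      then have "s y = s (a r)" using 1 by simp
      then show False using msinj[OF im] yr by blast
    qed
    have "s' y = s (a r)" using s'_cases(2)[OF y] 1 by simp
    then have "adjr s' a' y (s (a r))" unfolding adjr_def by simp
    then have "y \<in> comp (s (a r))" using comp_closed[OF comp_self] by blast
    then show ?thesis using K2_eq[OF ne] by simp
  next
    case 2
    then have ne: "s (a r) \<noteq> a r" using yr by simp
    show ?thesis using comp_self K2_eq[OF ne] 2 by simp
  next
    case 3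
    then have "r = y" using mainj[OF im] by blast
    then show ?thesis using yr by simp
  next
    case 4
    then have "y = r" using ar(3) by simp
    then show ?thesis using yr by simp
  qed
qed

lemma inner_adj:
  assumes y: "y \<in> B'" and z: "z \<in> B'" and h: "adjr s a y z"
  shows "adjr s' a' y z \<or> adjr s' a' z y"
proof -
  have zr: "z \<noteq> r" "z \<noteq> a r" using z unfolding delB_def by auto
  have yr: "y \<noteq> r" "y \<noteq> a r" using y unfolding delB_def by auto
  consider "z = s y" | "y = s z" | "z = a y" | "y = a z" using h unfolding adjr_def by blast
  then show ?thesis
  proof cases
    case 1
    then have "s' y = z" using s'_cases(3)[OF y] zr by simp
    then show ?thesis unfolding adjr_def by simp
  next
    case 2
    then have "s' z = y" using s'_cases(3)[OF z] yr by simp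
    then show ?thesis unfolding adjr_def by simp
  next
    case 3
    then have "a' y = z" using y unfolding restr_def by simp
    then show ?thesis unfolding adjr_def by simp
  next
    case 4
    then have "a' z = y" using z unfolding restr_def by simp
    then show ?thesis unfolding adjr_def by simp
  qed
qed

lemma K_closed:
  assumes z: "z \<in> K1 \<union> K2" and h: "adjr s' a' y z \<or> adjr s' a' z y"
  shows "y \<in> K1 \<union> K2"
proof -
  have h': "adjr s' a' z y \<or> adjr s' a' y z" using h by blast
  show ?thesis
  proof (cases "z \<in> K1")
    case True
    then have ne: "s r \<noteq> r" unfolding K1_def by (auto split: if_splits)
    then show ?thesis using comp_closed[of z "s r" y] True h' K1_eq[OF ne] by simp
  next
    case False
    then have zK: "z \<in> K2" using z by simp
    then have ne: "s (a r) \<noteq> a r" unfolding K2_def by (auto split: if_splits)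
    then show ?thesis using comp_closed[of z "s (a r)" y] zK h' K2_eq[OF ne] by simp
  qed
qed

lemma cover: "B' \<subseteq> K1 \<union> K2"
proof
  fix x assume x: "x \<in> B'"
  then have xB: "x \<in> B" unfolding delB_def by auto
  have "(adjr s a)\<^sup>*\<^sup>* x r" using mconn[OF im xB rB] .
  then have "x \<in> B \<longrightarrow> x \<in> {r, a r} \<or> x \<in> K1 \<union> K2"
  proof (induct rule: converse_rtranclp_induct)
    case base then show ?case by simp
  next
    case (step y z)
    show ?case
    proof
      assume yB: "y \<in> B"
      show "y \<in> {r, a r} \<or> y \<in> K1 \<union> K2"
      proof (cases "y \<in> {r, a r}")
        case False
        then have yB': "y \<in> B'" using yB unfolding delB_def by blast
        have zB: "z \<in> B" using adj_B[OF yB step(1)] .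
        consider "z = r" | "z = a r" | "z \<in> B'" using zB unfolding delB_def by blast
        then show ?thesis
        proof cases
          case 1 then show ?thesis using toK1[OF yB'] step(1) by simp
        next
          case 2 then show ?thesis using toK2[OF yB'] step(1) by simp
        next
          case 3
          have "z \<notin> {r, a r}" using 3 unfolding delB_def by blast
          then have zK: "z \<in> K1 \<union> K2" using step(3) zB by blast
          show ?thesis using K_closed[OF zK inner_adj[OF yB' 3 step(1)]] by blast
        qed
      qed simp
    qed
  qed
  then show "x \<in> K1 \<union> K2" using xB x unfolding delB_def by blast
qed

end


lemma rtranclp_transfer:
  assumes "R\<^sup>*\<^sup>* x y" "x \<in> K" "\<And>u v. u \<in> K \<Longrightarrow> R u v \<Longrightarrow> v \<in> K \<and> R' u v"
  shows "R'\<^sup>*\<^sup>* x y"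
proof -
  have "R'\<^sup>*\<^sup>* x y \<and> y \<in> K" using assms(1)
  proof (induct rule: rtranclp_induct)
    case base then show ?case using assms(2) by simp
  next
    case (step y z)
    then have "z \<in> K" "R' y z" using assms(3) by blast+
    then show ?case using step(3) by (meson rtranclp.rtrancl_into_rtrancl)
  qed
  then show ?thesis by blast
qed

lemma conj_cyc_set:
  assumes "\<And>b. b \<in> K \<Longrightarrow> t b \<in> K" "\<And>b. b \<in> K \<Longrightarrow> f (t b) = u (f b)" "x \<in> K"
  shows "f ` cyc t x = cyc u (f x)" "cyc t x \<subseteq> K"
proof -
  have h: "f ((t ^^ n) x) = (u ^^ n) (f x) \<and> (t ^^ n) x \<in> K" for n
    by (induct n) (auto simp: assms)
  show "f ` cyc t x = cyc u (f x)" unfolding cyc_def using h by (auto simp: image_def)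
  show "cyc t x \<subseteq> K" unfolding cyc_def using h by auto
qed

lemma restr_in: "x \<in> K \<Longrightarrow> restr K f x = f x" unfolding restr_def by simp
lemma restr_out: "x \<notin> K \<Longrightarrow> restr K f x = x" unfolding restr_def by simp

definition enc :: "nat set \<Rightarrow> (nat \<Rightarrow> nat) \<Rightarrow> (nat \<Rightarrow> nat) \<Rightarrow> nat list \<Rightarrow> (nat \<Rightarrow> nat) \<Rightarrow> bool" where
  "enc B s a w f \<longleftrightarrow> inj_on f B \<and> f ` B \<subseteq> {0..<length w} \<and> card B = length w \<and>
     (\<forall>b\<in>B. f (s b) = sg w (f b) \<and> f (a b) = al w (f b))"

lemma good_Nil: "good []"
  unfolding good_def dow_def dominating_def sinks_def by auto

lemma enc_empty: "enc {} s a [] f" unfolding enc_def by auto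

context
  fixes B :: "nat set" and s a :: "nat \<Rightarrow> nat" and r :: nat
  assumes im: "is_map B s a" and lp: "loopless B s a" and rB: "r \<in> B"
begin

lemma submap:
  assumes KB: "K \<subseteq> delB B a r"
    and cl: "\<And>x y. x \<in> K \<Longrightarrow> adjr (dsig B s a r) (restr (delB B a r) a) x y \<Longrightarrow> y \<in> K"
    and conn: "\<And>x y. x \<in> K \<Longrightarrow> y \<in> K \<Longrightarrow> (adjr (dsig B s a r) (restr (delB B a r) a))\<^sup>*\<^sup>* x y"
  shows "is_map K (restr K (dsig B s a r)) (restr K a) \<and> loopless K (restr K (dsig B s a r)) (restr K a)"
proof -
  let ?B' = "delB B a r"
  let ?s' = "dsig B s a r"
  let ?a' = "restr ?B' a"
  let ?sK = "restr K ?s'" and ?aK = "restr K a"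
  have KB0: "K \<subseteq> B" using KB B'_sub[OF im lp rB] by blast
  have fin: "finite K" using finite_subset[OF KB0 mfin[OF im]] .
  have xB': "x \<in> ?B'" if "x \<in> K" for x using that KB by blast
  have a'eq: "?a' x = a x" if "x \<in> K" for x using xB'[OF that] by (rule restr_in)
  have s'K: "?s' x \<in> K" if "x \<in> K" for x using cl[OF that, of "?s' x"] unfolding adjr_def by simp
  have aK: "a x \<in> K" if "x \<in> K" for x using cl[OF that, of "a x"] a'eq[OF that] unfolding adjr_def by simp
  have sKp: "?sK permutes K"
  proof (rule bij_imp_permutes)
    have "inj_on ?sK K"
      using s'_inj[OF im lp rB] xB' unfolding inj_on_def restr_def by auto
    moreover have "?sK ` K \<subseteq> K" using s'K unfolding restr_def by auto
    ultimately show "bij_betw ?sK K K" using endo_inj_surj[OF fin] unfolding bij_betw_def by auto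
    show "x \<notin> K \<Longrightarrow> ?sK x = x" for x by (rule restr_out)
  qed
  have aKp: "?aK permutes K"
  proof (rule bij_imp_permutes)
    have "inj_on ?aK K"
      using mainj[OF im] unfolding inj_on_def restr_def by auto
    moreover have "?aK ` K \<subseteq> K" using aK unfolding restr_def by auto
    ultimately show "bij_betw ?aK K K" using endo_inj_surj[OF fin] unfolding bij_betw_def by auto
    show "x \<notin> K \<Longrightarrow> ?aK x = x" for x by (rule restr_out)
  qed
  have inv: "?aK b \<noteq> b \<and> ?aK (?aK b) = b" if "b \<in> K" for b
    using minv[OF im] KB0 that aK unfolding restr_def by auto
  have transfer: "v \<in> K \<and> adjr ?sK ?aK u v" if "u \<in> K" "adjr ?s' ?a' u v" for u v
  proof -
    have vK: "v \<in> K" using cl that by blast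
    have "adjr ?sK ?aK u v"
      using that(2) restr_in[OF that(1), of ?s'] restr_in[OF vK, of ?s'] restr_in[OF that(1), of a]
        restr_in[OF vK, of a] a'eq[OF that(1)] a'eq[OF vK] unfolding adjr_def by auto
    then show ?thesis using vK by blast
  qed
  have connK: "(adjr ?sK ?aK)\<^sup>*\<^sup>* b c" if "b \<in> K" "c \<in> K" for b c
    using rtranclp_transfer[OF conn[OF that] that(1)] transfer by blast
  have map: "is_map K ?sK ?aK" unfolding is_map_alt using fin sKp aKp inv connK by blast
  have "loopless K ?sK ?aK" unfolding loopless_def
  proof (intro ballI)
    fix e v assume e: "e \<in> map_edges K ?aK" and v: "v \<in> map_vertices K ?sK"
    obtain b where b: "b \<in> K" "e = cyc ?aK b" using e unfolding map_edges_def by auto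
    obtain c where c: "c \<in> K" "v = cyc ?sK c" using v unfolding map_vertices_def by auto
    have e2: "e = {b, a b}" using cyc_invol[of ?aK b] inv[OF b(1)] b restr_in[OF b(1)] by auto
    have vsub: "v \<subseteq> cyc s c"
    proof -
      have "?sK y \<in> cyc s c" if "y \<in> cyc s c" for y
      proof (cases "y \<in> K")
        case True
        then have "?sK y = ?s' y" by (rule restr_in)
        moreover have "?s' y \<in> cyc s y" using s'_cyc[OF im lp rB xB'[OF True]] .
        ultimately show ?thesis using cyc_trans[OF that] by simp
      next
        case False then show ?thesis using that restr_out by metis
      qed
      then show ?thesis using c cyc_mono by blast
    qed
    show "\<not> e \<subseteq> v"
    proof
      assume "e \<subseteq> v"
      then have "b \<in> cyc s c" "a b \<in> cyc s c" using e2 vsub by auto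
      then have "a b \<in> cyc s b" using cyc_eq[OF mpermutation[OF im]] by blast
      then show False using noloop[OF im lp] b KB0 by blast
    qed
  qed
  then show ?thesis using map by blast
qed

end


context
  fixes B :: "nat set" and s a :: "nat \<Rightarrow> nat" and r :: nat
  assumes im: "is_map B s a" and lp: "loopless B s a" and rB: "r \<in> B"
begin

lemma K1_cases: "(K1 B s a r = {} \<and> s r = r) \<or> (s r \<noteq> r \<and> K1 B s a r = comp B s a r (s r) \<and> s r \<in> K1 B s a r)"
  unfolding K1_def[OF im lp rB] using comp_self[OF im lp rB] by auto

lemma K2_cases: "(K2 B s a r = {} \<and> s (a r) = a r) \<or> (s (a r) \<noteq> a r \<and> K2 B s a r = comp B s a r (s (a r)) \<and> s (a r) \<in> K2 B s a r)"
  unfolding K2_def[OF im lp rB] using comp_self[OF im lp rB] by auto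

lemma bridge_case:
  fixes X Y :: "nat list" and f1 f2 :: "nat \<Rightarrow> nat"
  defines "K1' \<equiv> K1 B s a r" and "K2' \<equiv> K2 B s a r" and "sp \<equiv> dsig B s a r"
  assumes disj: "K1' \<inter> K2' = {}"
    and gX: "good X" and e2: "enc K2' (restr K2' sp) (restr K2' a) X f2" and r2: "K2' \<noteq> {} \<Longrightarrow> f2 (s (a r)) = 0"
    and gY: "good Y" and e1: "enc K1' (restr K1' sp) (restr K1' a) Y f1" and r1: "K1' \<noteq> {} \<Longrightarrow> f1 (s r) = 0"
  shows "\<exists>w f. good w \<and> enc B s a w f \<and> f r = 0"
proof -
  let ?B' = "delB B a r"
  define a0 where "a0 = length X"
  define b0 where "b0 = length Y"
  obtain w where w: "good w" "length w = a0 + b0 + 2" "al w 0 = Suc a0" "al w (Suc a0) = 0"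
     "sg w 0 = (if b0 = 0 then 0 else Suc (Suc a0))" "sg w (Suc a0) = 1"
     "\<And>j. j<a0 \<Longrightarrow> al w (Suc j) = Suc (al X j) \<and> sg w (Suc j) = (if sg X j = 0 then Suc a0 else Suc (sg X j))"
     "\<And>j. j<b0 \<Longrightarrow> al w (a0 + 2 + j) = a0 + 2 + al Y j \<and> sg w (a0 + 2 + j) = (if sg Y j = 0 then 0 else a0 + 2 + sg Y j)"
    using bridge_word[OF gX gY] unfolding a0_def b0_def by blast
  have ar: "a r \<in> B" "a r \<noteq> r" "a (a r) = r" using ar[OF im lp rB] by auto
  have Ksub: "K1' \<subseteq> ?B'" "K2' \<subseteq> ?B'" using K_sub[OF im lp rB] unfolding K1'_def K2'_def by auto
  have cov: "?B' = K1' \<union> K2'" using cover[OF im lp rB] Ksub unfolding K1'_def K2'_def by blast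
  have B'def: "?B' = B - {r, a r}" unfolding delB_def by simp
  have notr: "x \<noteq> r" "x \<noteq> a r" "x \<in> B" if "x \<in> ?B'" for x using that unfolding delB_def by auto
  have finB: "finite B" using mfin[OF im] .
  have cK2: "card K2' = a0" using e2 unfolding enc_def a0_def by auto
  have cK1: "card K1' = b0" using e1 unfolding enc_def b0_def by auto
  have finK: "finite K1'" "finite K2'" using Ksub finB unfolding delB_def by (auto intro: finite_subset)
  have cB': "card ?B' = b0 + a0" using cov card_Un_disjoint[OF finK disj] cK1 cK2 by simp
  have cB: "card B = a0 + b0 + 2" using B'_card[OF im lp rB] cB' rB ar finB
  proof -
    have "card B \<ge> 2"
    proof -
      have "{r, a r} \<subseteq> B" using rB ar by auto
      then have "card {r, a r} \<le> card B" using card_mono[OF finB] by blast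
      then show ?thesis using ar by simp
    qed
    then show ?thesis using B'_card[OF im lp rB] cB' by simp
  qed
  define f where "f x = (if x = r then 0 else if x = a r then Suc a0 else if x \<in> K2' then Suc (f2 x) else a0 + 2 + f1 x)" for x
  have fr: "f r = 0" "f (a r) = Suc a0" unfolding f_def using ar by auto
  have fK2: "f x = Suc (f2 x)" if "x \<in> K2'" for x using that Ksub notr unfolding f_def by auto
  have fK1: "f x = a0 + 2 + f1 x" if "x \<in> K1'" for x using that Ksub notr disj unfolding f_def by auto
  have f2lt: "f2 x < a0" if "x \<in> K2'" for x using e2 that unfolding enc_def a0_def by auto
  have f1lt: "f1 x < b0" if "x \<in> K1'" for x using e1 that unfolding enc_def b0_def by auto
  have f2inj: "inj_on f2 K2'" and f1inj: "inj_on f1 K1'" using e1 e2 unfolding enc_def by auto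
  have Bcases: "x = r \<or> x = a r \<or> x \<in> K1' \<or> x \<in> K2'" if "x \<in> B" for x using that cov unfolding delB_def by blast
  have clo: "sp x \<in> comp B s a r x0 \<and> a x \<in> comp B s a r x0" if "x \<in> comp B s a r x0" "x \<in> ?B'" for x x0
  proof -
    have "adjr sp (restr ?B' a) x (sp x)" "adjr sp (restr ?B' a) x (a x)"
      using restr_in[OF that(2), of a] unfolding adjr_def by auto
    then show ?thesis using comp_closed[OF im lp rB that(1)] unfolding sp_def by blast
  qed
  have clK2: "sp x \<in> K2' \<and> a x \<in> K2'" if "x \<in> K2'" for x
    using clo[of x "s (a r)"] that K2_cases Ksub unfolding K2'_def by auto
  have clK1: "sp x \<in> K1' \<and> a x \<in> K1'" if "x \<in> K1'" for x
    using clo[of x "s r"] that K1_cases Ksub unfolding K1'_def by auto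
  have sK2: "restr K2' sp x \<in> K2'" "f2 (restr K2' sp x) = sg X (f2 x)"
    "restr K2' a x \<in> K2'" "f2 (restr K2' a x) = al X (f2 x)" if "x \<in> K2'" for x
    using e2 that clK2[OF that] restr_in[OF that] unfolding enc_def by auto
  have sK1: "restr K1' sp x \<in> K1'" "f1 (restr K1' sp x) = sg Y (f1 x)"
    "restr K1' a x \<in> K1'" "f1 (restr K1' a x) = al Y (f1 x)" if "x \<in> K1'" for x
    using e1 that clK1[OF that] restr_in[OF that] unfolding enc_def by auto
  have inj: "inj_on f B"
  proof (rule inj_onI)
    fix x y assume x: "x \<in> B" and y: "y \<in> B" and e: "f x = f y"
    have vx: "(x = r \<and> f x = 0) \<or> (x = a r \<and> f x = Suc a0) \<or> (x \<in> K2' \<and> 0 < f x \<and> f x \<le> a0)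
       \<or> (x \<in> K1' \<and> a0 + 2 \<le> f x)"
      using Bcases[OF x] fr fK2 fK1 f2lt by fastforce
    have vy: "(y = r \<and> f y = 0) \<or> (y = a r \<and> f y = Suc a0) \<or> (y \<in> K2' \<and> 0 < f y \<and> f y \<le> a0)
       \<or> (y \<in> K1' \<and> a0 + 2 \<le> f y)"
      using Bcases[OF y] fr fK2 fK1 f2lt by fastforce
    show "x = y"
    proof -
      have "x \<in> K2' \<Longrightarrow> y \<in> K2' \<Longrightarrow> x = y" using e fK2 f2inj unfolding inj_on_def by auto
      moreover have "x \<in> K1' \<Longrightarrow> y \<in> K1' \<Longrightarrow> x = y" using e fK1 f1inj unfolding inj_on_def by auto
      ultimately show ?thesis using vx vy e by fastforce
    qed
  qed
  have img: "f ` B \<subseteq> {0..<length w}"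
  proof
    fix y assume "y \<in> f ` B"
    then obtain x where x: "x \<in> B" "y = f x" by auto
    show "y \<in> {0..<length w}" using Bcases[OF x(1)] x fr fK2 fK1 f2lt f1lt w(2) by fastforce
  qed
  have conj: "f (s x) = sg w (f x) \<and> f (a x) = al w (f x)" if x: "x \<in> B" for x
  proof -
    consider "x = r" | "x = a r" | "x \<in> K2'" | "x \<in> K1'" using Bcases[OF x] by blast
    then show ?thesis
    proof cases
      case 1
      have "f (s r) = sg w 0"
      proof (cases "K1' = {}")
        case True
        then have "s r = r" "b0 = 0" using K1_cases cK1 unfolding K1'_def by auto
        then show ?thesis using w(5) fr by simp
      next
        case False
        then have "s r \<in> K1'" using K1_cases unfolding K1'_def by auto
        moreover have "b0 \<noteq> 0" using False cK1 finK by auto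
        ultimately show ?thesis using fK1 r1[OF False] w(5) by simp
      qed
      then show ?thesis using 1 fr w(3) by simp
    next
      case 2
      have "f (s (a r)) = sg w (Suc a0)"
      proof (cases "K2' = {}")
        case True
        then have "s (a r) = a r" "a0 = 0" using K2_cases cK2 unfolding K2'_def by auto
        then show ?thesis using w(6) fr by simp
      next
        case False
        then have "s (a r) \<in> K2'" using K2_cases unfolding K2'_def by auto
        then show ?thesis using fK2 r2[OF False] w(6) by simp
      qed
      then show ?thesis using 2 fr w(4) ar by simp
    next
      case 3
      have xB': "x \<in> ?B'" using 3 Ksub by blast
      have ne: "K2' \<noteq> {}" using 3 by auto
      have sar: "s (a r) \<in> K2'" using K2_cases ne unfolding K2'_def by auto
      have j: "f2 x < a0" using f2lt[OF 3] .
      have fx: "f x = Suc (f2 x)" using fK2[OF 3] .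
      have ax: "f (a x) = al w (f x)"
      proof -
        have "restr K2' a x = a x" using 3 by (rule restr_in)
        then have "a x \<in> K2'" "f2 (a x) = al X (f2 x)" using sK2[OF 3] by auto
        then show ?thesis using fK2 fx w(7)[OF j] by simp
      qed
      have s'x: "restr K2' sp x = sp x" using 3 by (rule restr_in)
      have sx: "f (s x) = sg w (f x)"
      proof (cases "s x = r")
        case True
        then have "sp x = s r" using s'_cases(1)[OF im lp rB xB'] unfolding sp_def by simp
        have "s r \<noteq> r"
        proof
          assume "s r = r"
          then have "s x = s r" using True by simp
          then show False using msinj[OF im] notr[OF xB'] by blast
        qed
        then have "s r \<in> K1'" using K1_cases unfolding K1'_def by auto
        moreover have "s r \<in> K2'" using sK2(1)[OF 3] s'x \<open>sp x = s r\<close> by simp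
        ultimately show ?thesis using disj by blast
      next
        case F: False
        show ?thesis
        proof (cases "s x = a r")
          case True
          then have "sp x = s (a r)" using s'_cases(2)[OF im lp rB xB'] unfolding sp_def by simp
          then have "sg X (f2 x) = 0" using sK2(2)[OF 3] s'x r2[OF ne] by simp
          then show ?thesis using w(7)[OF j] fx True fr by simp
        next
          case False
          then have s'e: "sp x = s x" using s'_cases(3)[OF im lp rB xB'] F unfolding sp_def by simp
          then have sxK: "s x \<in> K2'" using sK2(1)[OF 3] s'x by simp
          have sg2: "sg X (f2 x) = f2 (s x)" using sK2(2)[OF 3] s'x s'e by simp
          have "f2 (s x) \<noteq> 0"
          proof
            assume "f2 (s x) = 0"
            then have "f2 (s x) = f2 (s (a r))" using r2[OF ne] by simp
            then have "s x = s (a r)" using f2inj sxK sar unfolding inj_on_def by blast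
            then have "x = a r" by (rule msinj[OF im])
            then show False using notr[OF xB'] by simp
          qed
          then show ?thesis using w(7)[OF j] fx sg2 fK2[OF sxK] by simp
        qed
      qed
      show ?thesis using sx ax by simp
    next
      case 4
      have xB': "x \<in> ?B'" using 4 Ksub by blast
      have ne: "K1' \<noteq> {}" using 4 by auto
      have sr: "s r \<in> K1'" using K1_cases ne unfolding K1'_def by auto
      have j: "f1 x < b0" using f1lt[OF 4] .
      have fx: "f x = a0 + 2 + f1 x" using fK1[OF 4] .
      have ax: "f (a x) = al w (f x)"
      proof -
        have "restr K1' a x = a x" using 4 by (rule restr_in)
        then have "a x \<in> K1'" "f1 (a x) = al Y (f1 x)" using sK1[OF 4] by auto
        then show ?thesis using fK1 fx w(8)[OF j] by simp
      qed
      have s'x: "restr K1' sp x = sp x" using 4 by (rule restr_in)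
      have sx: "f (s x) = sg w (f x)"
      proof (cases "s x = a r")
        case True
        then have "sp x = s (a r)" using s'_cases(2)[OF im lp rB xB'] unfolding sp_def by simp
        have "s (a r) \<noteq> a r"
        proof
          assume "s (a r) = a r"
          then have "s x = s (a r)" using True by simp
          then show False using msinj[OF im] notr[OF xB'] by blast
        qed
        then have "s (a r) \<in> K2'" using K2_cases unfolding K2'_def by auto
        moreover have "s (a r) \<in> K1'" using sK1(1)[OF 4] s'x \<open>sp x = s (a r)\<close> by simp
        ultimately show ?thesis using disj by blast
      next
        case F: False
        show ?thesis
        proof (cases "s x = r")
          case True
          then have "sp x = s r" using s'_cases(1)[OF im lp rB xB'] unfolding sp_def by simp
          then have "sg Y (f1 x) = 0" using sK1(2)[OF 4] s'x r1[OF ne] by simp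
          then show ?thesis using w(8)[OF j] fx True fr by simp
        next
          case False
          then have s'e: "sp x = s x" using s'_cases(3)[OF im lp rB xB'] F unfolding sp_def by simp
          then have sxK: "s x \<in> K1'" using sK1(1)[OF 4] s'x by simp
          have sg1: "sg Y (f1 x) = f1 (s x)" using sK1(2)[OF 4] s'x s'e by simp
          have "f1 (s x) \<noteq> 0"
          proof
            assume "f1 (s x) = 0"
            then have "f1 (s x) = f1 (s r)" using r1[OF ne] by simp
            then have "s x = s r" using f1inj sxK sr unfolding inj_on_def by blast
            then have "x = r" by (rule msinj[OF im])
            then show False using notr[OF xB'] by simp
          qed
          then show ?thesis using w(8)[OF j] fx sg1 fK1[OF sxK] by simp
        qed
      qed
      show ?thesis using sx ax by simp
    qed
  qed
  have "enc B s a w f" unfolding enc_def using inj img cB w(2) conj by simp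
  then show ?thesis using w(1) fr by blast
qed

end


context
  fixes B :: "nat set" and s a :: "nat \<Rightarrow> nat" and r :: nat
  assumes im: "is_map B s a" and lp: "loopless B s a" and rB: "r \<in> B"
begin

lemma nonbridge_case:
  fixes v :: "nat list" and g :: "nat \<Rightarrow> nat"
  defines "sp \<equiv> dsig B s a r" and "BB \<equiv> delB B a r"
  assumes nr: "s r \<noteq> r" and nar: "s (a r) \<noteq> a r"
    and gv: "good v" and e: "enc BB (restr BB sp) (restr BB a) v g" and r0: "g (s r) = 0"
  shows "\<exists>w f. good w \<and> enc B s a w f \<and> f r = 0"
proof -
  have dv: "dow v" using gv by (rule good_dow)
  have ar: "a r \<in> B" "a r \<noteq> r" "a (a r) = r" using ar[OF im lp rB] by auto
  have notr: "x \<noteq> r" "x \<noteq> a r" "x \<in> B" if "x \<in> BB" for x using that unfolding BB_def delB_def by auto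
  have srB: "s r \<in> BB" using sr_B'[OF im lp rB nr] unfolding BB_def .
  have sarB: "s (a r) \<in> BB" using sar_B'[OF im lp rB nar] unfolding BB_def .
  have spin: "sp x \<in> BB" if "x \<in> BB" for x using s'_in[OF im lp rB] that unfolding sp_def BB_def .
  have ain: "a x \<in> BB" if "x \<in> BB" for x
    using a'_in[OF im lp rB] that restr_in[OF that, of a] unfolding BB_def by metis
  have ginj: "inj_on g BB" and glt: "\<And>x. x \<in> BB \<Longrightarrow> g x < length v" and gc: "card BB = length v"
    using e unfolding enc_def by auto
  have gs: "g (sp x) = sg v (g x)" and ga: "g (a x) = al v (g x)" if "x \<in> BB" for x
    using e that restr_in[OF that, of sp] restr_in[OF that, of a] unfolding enc_def by auto
  define k where "k = g (s (a r))"
  have sne: "s (a r) \<noteq> s r" using msinj[OF im] ar by metis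
  have k0: "k \<noteq> 0"
  proof
    assume "k = 0"
    then have "g (s (a r)) = g (s r)" using r0 unfolding k_def by simp
    then show False using ginj sarB srB sne unfolding inj_on_def by blast
  qed
  have kl: "k < length v" using glt[OF sarB] unfolding k_def .
  have vk: "vtx v k \<noteq> {}"
  proof
    assume vk0: "vtx v k = {}"
    have v0: "0 < length v" using kl by linarith
    have "k \<in> cyc (sg v) 0" using class_cyc[OF dv v0] vk0 vtx_zero kl by auto
    moreover have cc: "g ` cyc (restr BB sp) (s r) = cyc (sg v) (g (s r))" "cyc (restr BB sp) (s r) \<subseteq> BB"
      using conj_cyc_set[of BB "restr BB sp" g "sg v" "s r"] srB spin gs restr_in by auto
    ultimately have "k \<in> g ` cyc (restr BB sp) (s r)" using r0 by simp
    then obtain z where z: "z \<in> cyc (restr BB sp) (s r)" "g z = k" by (auto simp: image_def)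
    have "z = s (a r)" using ginj z cc(2) sarB unfolding inj_on_def k_def by blast
    then have in1: "s (a r) \<in> cyc (restr BB sp) (s r)" using z by simp
    have "cyc (restr BB sp) (s r) \<subseteq> cyc s (s r)"
    proof (rule cyc_mono)
      fix y assume y: "y \<in> cyc s (s r)"
      show "restr BB sp y \<in> cyc s (s r)"
      proof (cases "y \<in> BB")
        case True
        then have "restr BB sp y = sp y" by (rule restr_in)
        moreover have "sp y \<in> cyc s y" using s'_cyc[OF im lp rB] True unfolding sp_def BB_def by blast
        ultimately show ?thesis using cyc_trans[OF y] by simp
      next
        case False then show ?thesis using y by (simp add: restr_out)
      qed
    qed
    then have "s (a r) \<in> cyc s (s r)" using in1 by blast
    moreover have "cyc s (s r) = cyc s r" using cyc_eq[OF mpermutation[OF im] cyc_step[OF cyc_self]] .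
    ultimately have "s (a r) \<in> cyc s r" by simp
    then have "cyc s (s (a r)) = cyc s r" by (rule cyc_eq[OF mpermutation[OF im]])
    moreover have "cyc s (s (a r)) = cyc s (a r)" using cyc_eq[OF mpermutation[OF im] cyc_step[OF cyc_self]] .
    ultimately have "a r \<in> cyc s r" using cyc_self[of "a r" s] by simp
    then show False using noloop[OF im lp rB] by simp
  qed
  have k1: "1 \<le> k" using k0 by simp
  define w where "w = ins k v"
  have W: "good w" "length w = length v + 2" "al w 0 = Suc k" "al w (Suc k) = 0"
     "sg w 0 = 1" "sg w (Suc k) = Suc (Suc k)"
     "\<And>j. j<length v \<Longrightarrow> al w (sh k j) = sh k (al v j) \<and>
        sg w (sh k j) = (if sg v j = 0 then 0 else if sg v j = k then Suc k else sh k (sg v j))"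
    using nonbridge_word[OF gv k1 kl vk] unfolding w_def by auto
  define f where "f x = (if x = r then 0 else if x = a r then Suc k else sh k (g x))" for x
  have fr: "f r = 0" "f (a r) = Suc k" unfolding f_def using ar by auto
  have fB: "f x = sh k (g x)" if "x \<in> BB" for x using notr[OF that] unfolding f_def by simp
  have Bcases: "x = r \<or> x = a r \<or> x \<in> BB" if "x \<in> B" for x using that unfolding BB_def delB_def by blast
  have finB: "finite B" using mfin[OF im] .
  have cB: "card B = length v + 2"
  proof -
    have "card BB = card B - 2" using B'_card[OF im lp rB] unfolding BB_def .
    moreover have "card {r, a r} \<le> card B" using card_mono[OF finB, of "{r, a r}"] rB ar by blast
    ultimately show ?thesis using gc ar by simp
  qed
  have inj: "inj_on f B"
  proof (rule inj_onI)
    fix x y assume x: "x \<in> B" and y: "y \<in> B" and e: "f x = f y"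
    have vx: "(x = r \<and> f x = 0) \<or> (x = a r \<and> f x = Suc k) \<or> (x \<in> BB \<and> f x = sh k (g x))"
      using Bcases[OF x] fr fB by blast
    have vy: "(y = r \<and> f y = 0) \<or> (y = a r \<and> f y = Suc k) \<or> (y \<in> BB \<and> f y = sh k (g y))"
      using Bcases[OF y] fr fB by blast
    have bb: "x \<in> BB \<Longrightarrow> y \<in> BB \<Longrightarrow> x = y" using e fB ginj sh_inj unfolding inj_on_def by metis
    show "x = y" using vx vy e bb sh_ne[of k "g x"] sh_ne[of k "g y"] by auto
  qed
  have img: "f ` B \<subseteq> {0..<length w}"
  proof
    fix y assume "y \<in> f ` B"
    then obtain x where x: "x \<in> B" "y = f x" by auto
    show "y \<in> {0..<length w}" using Bcases[OF x(1)] x fr fB glt sh_lt[OF dv] W(2) kl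
      by (auto simp: sh_def)
  qed
  have sh0: "sh k 0 = 1" using k0 unfolding sh_def by simp
  have shk: "sh k k = Suc (Suc k)" unfolding sh_def by simp
  have conj: "f (s x) = sg w (f x) \<and> f (a x) = al w (f x)" if x: "x \<in> B" for x
  proof -
    consider "x = r" | "x = a r" | "x \<in> BB" using Bcases[OF x] by blast
    then show ?thesis
    proof cases
      case 1
      then show ?thesis using fB[OF srB] r0 sh0 W(5) fr W(3) by simp
    next
      case 2
      then show ?thesis using fB[OF sarB] shk W(6) fr W(4) ar unfolding k_def by simp
    next
      case 3
      have j: "g x < length v" using glt[OF 3] .
      have fx: "f x = sh k (g x)" using fB[OF 3] .
      have ax: "f (a x) = al w (f x)" using fB[OF ain[OF 3]] ga[OF 3] W(7)[OF j] fx by simp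
      have sx: "f (s x) = sg w (f x)"
      proof (cases "s x = r")
        case True
        then have "sp x = s r" using s'_cases(1)[OF im lp rB] 3 unfolding sp_def BB_def by blast
        then have "sg v (g x) = 0" using gs[OF 3] r0 by simp
        then show ?thesis using W(7)[OF j] fx True fr by simp
      next
        case F: False
        show ?thesis
        proof (cases "s x = a r")
          case True
          then have "sp x = s (a r)" using s'_cases(2)[OF im lp rB] 3 unfolding sp_def BB_def by blast
          then have "sg v (g x) = k" using gs[OF 3] unfolding k_def by simp
          then show ?thesis using W(7)[OF j] fx True fr k0 by simp
        next
          case False
          then have spx: "sp x = s x" using s'_cases(3)[OF im lp rB] 3 F unfolding sp_def BB_def by blast
          then have sxB: "s x \<in> BB" using spin[OF 3] by simp
          have sgv: "sg v (g x) = g (s x)" using gs[OF 3] spx by simp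
          have n0: "g (s x) \<noteq> 0"
          proof
            assume "g (s x) = 0"
            then have "g (s x) = g (s r)" using r0 by simp
            then have "s x = s r" using ginj sxB srB unfolding inj_on_def by blast
            then show False using msinj[OF im] notr[OF 3] by blast
          qed
          have nk: "g (s x) \<noteq> k"
          proof
            assume "g (s x) = k"
            then have "s x = s (a r)" using ginj sxB sarB unfolding inj_on_def k_def by blast
            then show False using msinj[OF im] notr[OF 3] by blast
          qed
          show ?thesis using W(7)[OF j] fx sgv n0 nk fB[OF sxB] by simp
        qed
      qed
      show ?thesis using sx ax by simp
    qed
  qed
  have "enc B s a w f" unfolding enc_def using inj img cB W(2) conj by simp
  then show ?thesis using W(1) fr by blast
qed

end


theorem encode:
  "\<forall>B s a r. is_map B s a \<longrightarrow> loopless B s a \<longrightarrow> r \<in> B \<longrightarrow> card B = N \<longrightarrow>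
     (\<exists>w f. good w \<and> enc B s a w f \<and> f r = 0)"
proof (induct N rule: less_induct)
  case (less N)
  show ?case
  proof (intro allI impI)
    fix B s a r
    assume im: "is_map B s a" and lp: "loopless B s a" and rB: "r \<in> B" and cN: "card B = N"
    let ?sp = "dsig B s a r"
    let ?BB = "delB B a r"
    let ?comp = "comp B s a r"
    have cBB: "card ?BB < N"
    proof -
      have "card ?BB = card B - 2" using B'_card[OF im lp rB] .
      moreover have "0 < card B" using rB mfin[OF im] card_gt_0_iff by blast
      ultimately show ?thesis using cN by simp
    qed
    have finB: "finite B" using mfin[OF im] .
    have IHc: "\<exists>X f. good X \<and> enc (?comp x0) (restr (?comp x0) ?sp) (restr (?comp x0) a) X f \<and> f x0 = 0"
      if x0: "x0 \<in> ?BB" for x0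
    proof -
      have sub: "?comp x0 \<subseteq> ?BB" using comp_sub[OF im lp rB x0] .
      have cl: "y \<in> ?comp x0" if "x \<in> ?comp x0" "adjr ?sp (restr ?BB a) x y" for x y
        using comp_closed[OF im lp rB that(1)] that(2) by blast
      have cn: "(adjr ?sp (restr ?BB a))\<^sup>*\<^sup>* x y" if "x \<in> ?comp x0" "y \<in> ?comp x0" for x y
        using comp_conn[OF im lp rB that] .
      have sm: "is_map (?comp x0) (restr (?comp x0) ?sp) (restr (?comp x0) a) \<and>
          loopless (?comp x0) (restr (?comp x0) ?sp) (restr (?comp x0) a)"
        apply (rule submap[OF im lp rB sub])
        using cl cn by blast+
      have "card (?comp x0) \<le> card ?BB" using card_mono[OF _ sub] finB unfolding delB_def by auto
      then have "card (?comp x0) < N" using cBB by simp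
      then show ?thesis using less[rule_format, OF _ _ _ comp_self[OF im lp rB], of "card (?comp x0)"] sm by blast
    qed
    show "\<exists>w f. good w \<and> enc B s a w f \<and> f r = 0"
    proof (cases "s r \<noteq> r \<and> s (a r) \<noteq> a r \<and> s (a r) \<in> K1 B s a r")
      case True
      then have nr: "s r \<noteq> r" and nar: "s (a r) \<noteq> a r" and sK: "s (a r) \<in> ?comp (s r)"
        using K1_cases[OF im lp rB] by auto
      have srB: "s r \<in> ?BB" using sr_B'[OF im lp rB nr] .
      have eq2: "?comp (s (a r)) = ?comp (s r)" using comp_eq[OF im lp rB sK] .
      have K1e: "K1 B s a r = ?comp (s r)" and K2e: "K2 B s a r = ?comp (s r)"
        using K1_cases[OF im lp rB] K2_cases[OF im lp rB] nr nar eq2 by auto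
      have "?BB = ?comp (s r)" using cover[OF im lp rB] comp_sub[OF im lp rB srB] K1e K2e by blast
      then obtain v g where "good v" "enc ?BB (restr ?BB ?sp) (restr ?BB a) v g" "g (s r) = 0"
        using IHc[OF srB] by auto
      then show ?thesis using nonbridge_case[OF im lp rB nr nar] by blast
    next
      case False
      have disj: "K1 B s a r \<inter> K2 B s a r = {}"
      proof (rule ccontr)
        assume "K1 B s a r \<inter> K2 B s a r \<noteq> {}"
        then obtain x where x: "x \<in> K1 B s a r" "x \<in> K2 B s a r" by blast
        then have nr: "s r \<noteq> r" and k1: "K1 B s a r = ?comp (s r)" using K1_cases[OF im lp rB] by auto
        have nar: "s (a r) \<noteq> a r" and k2: "K2 B s a r = ?comp (s (a r))" using x K2_cases[OF im lp rB] by auto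
        have e1: "?comp x = ?comp (s r)" using comp_eq[OF im lp rB, of x "s r"] x k1 by simp
        have e2: "?comp x = ?comp (s (a r))" using comp_eq[OF im lp rB, of x "s (a r)"] x k2 by simp
        have "s (a r) \<in> ?comp (s r)" using comp_self[OF im lp rB, of "s (a r)"] e1 e2 by simp
        then have "s (a r) \<in> K1 B s a r" using k1 by simp
        then show False using False nr nar by blast
      qed
      obtain X f2 where X: "good X" "enc (K2 B s a r) (restr (K2 B s a r) ?sp) (restr (K2 B s a r) a) X f2"
        "K2 B s a r \<noteq> {} \<Longrightarrow> f2 (s (a r)) = 0"
      proof (cases "K2 B s a r = {}")
        case True
        then show ?thesis using that[of "[]" id] good_Nil enc_empty by simp
      next
        case F: False
        then have nar: "s (a r) \<noteq> a r" and k2: "K2 B s a r = ?comp (s (a r))" using K2_cases[OF im lp rB] by auto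
        then show ?thesis using that IHc[OF sar_B'[OF im lp rB nar]] by auto
      qed
      obtain Y f1 where Y: "good Y" "enc (K1 B s a r) (restr (K1 B s a r) ?sp) (restr (K1 B s a r) a) Y f1"
        "K1 B s a r \<noteq> {} \<Longrightarrow> f1 (s r) = 0"
      proof (cases "K1 B s a r = {}")
        case True
        then show ?thesis using that[of "[]" id] good_Nil enc_empty by simp
      next
        case F: False
        then have nr: "s r \<noteq> r" and k1: "K1 B s a r = ?comp (s r)" using K1_cases[OF im lp rB] by auto
        then show ?thesis using that IHc[OF sr_B'[OF im lp rB nr]] by auto
      qed
      show ?thesis using bridge_case[OF im lp rB disj X Y] .
    qed
  qed
qed


lemma ren_refl: "(w, w) \<in> renaming_rel"
  unfolding renaming_rel_def by (auto intro: exI[of _ id])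

lemma ren_sym:
  assumes "(u, v) \<in> renaming_rel"
  shows "(v, u) \<in> renaming_rel"
proof -
  obtain g where g: "inj_on g (set u)" "v = map g u" using assms unfolding renaming_rel_def by auto
  define h where "h = inv_into (set u) g"
  have "map h v = map (h \<circ> g) u" unfolding g(2) by simp
  also have "\<dots> = u" using g(1) unfolding h_def by (intro map_idI) (simp add: inv_into_f_f)
  finally have "map h v = u" .
  moreover have "inj_on h (set v)" unfolding g(2) h_def using g(1) by (simp add: inj_on_inv_into)
  ultimately show ?thesis unfolding renaming_rel_def by auto
qed

lemma ren_trans:
  assumes "(u, v) \<in> renaming_rel" "(v, x) \<in> renaming_rel"
  shows "(u, x) \<in> renaming_rel"
proof -
  obtain g where g: "inj_on g (set u)" "v = map g u" using assms(1) unfolding renaming_rel_def by auto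
  obtain h where h: "inj_on h (set v)" "x = map h v" using assms(2) unfolding renaming_rel_def by auto
  have "inj_on (h \<circ> g) (set u)" using g h by (simp add: comp_inj_on)
  moreover have "x = map (h \<circ> g) u" using g h by simp
  ultimately show ?thesis unfolding renaming_rel_def by auto
qed

lemma ren_class_eq:
  assumes "(u, v) \<in> renaming_rel"
  shows "renaming_rel `` {u} = renaming_rel `` {v}"
  using assms ren_sym ren_trans by blast

lemma iso_refl: "((B, s, a, r), (B, s, a, r)) \<in> rmap_iso"
  unfolding rmap_iso_def by (auto intro!: exI[of _ id])

lemma iso_trans:
  assumes "(x, y) \<in> rmap_iso" "(y, z) \<in> rmap_iso"
  shows "(x, z) \<in> rmap_iso"
proof -
  obtain B s a r where x: "x = (B, s, a, r)" by (cases x) auto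
  obtain B' s' a' r' where y: "y = (B', s', a', r')" by (cases y) auto
  obtain B'' s'' a'' r'' where z: "z = (B'', s'', a'', r'')" by (cases z) auto
  obtain \<phi> where p: "bij_betw \<phi> B B'" "\<forall>b\<in>B. \<phi> (s b) = s' (\<phi> b) \<and> \<phi> (a b) = a' (\<phi> b)" "\<phi> r = r'"
    using assms(1) unfolding x y rmap_iso_def by auto
  obtain \<psi> where q: "bij_betw \<psi> B' B''" "\<forall>b\<in>B'. \<psi> (s' b) = s'' (\<psi> b) \<and> \<psi> (a' b) = a'' (\<psi> b)" "\<psi> r' = r''"
    using assms(2) unfolding y z rmap_iso_def by auto
  have "bij_betw (\<psi> \<circ> \<phi>) B B''" using p(1) q(1) by (rule bij_betw_trans)
  moreover have "\<forall>b\<in>B. (\<psi> \<circ> \<phi>) (s b) = s'' ((\<psi> \<circ> \<phi>) b) \<and> (\<psi> \<circ> \<phi>) (a b) = a'' ((\<psi> \<circ> \<phi>) b)"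
    using p q bij_betwE[OF p(1)] by auto
  moreover have "(\<psi> \<circ> \<phi>) r = r''" using p q by simp
  ultimately show ?thesis unfolding x z rmap_iso_def by auto
qed

lemma iso_sym:
  assumes "((B, s, a, r), y) \<in> rmap_iso" "\<forall>b\<in>B. s b \<in> B \<and> a b \<in> B" "r \<in> B"
  shows "(y, (B, s, a, r)) \<in> rmap_iso"
proof -
  obtain B' s' a' r' where y: "y = (B', s', a', r')" by (cases y) auto
  obtain \<phi> where p: "bij_betw \<phi> B B'" "\<forall>b\<in>B. \<phi> (s b) = s' (\<phi> b) \<and> \<phi> (a b) = a' (\<phi> b)" "\<phi> r = r'"
    using assms(1) unfolding y rmap_iso_def by auto
  define \<psi> where "\<psi> = inv_into B \<phi>"
  have bi: "bij_betw \<psi> B' B" unfolding \<psi>_def using p(1) by (rule bij_betw_inv_into)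
  have inv1: "\<psi> (\<phi> b) = b" if "b \<in> B" for b
    unfolding \<psi>_def using p(1) that bij_betw_inv_into_left by metis
  have "\<psi> (s' b') = s (\<psi> b') \<and> \<psi> (a' b') = a (\<psi> b')" if b': "b' \<in> B'" for b'
  proof -
    obtain b where b: "b \<in> B" "b' = \<phi> b" using b' p(1) unfolding bij_betw_def by auto
    have "\<psi> b' = b" using inv1[OF b(1)] b by simp
    moreover have "s' b' = \<phi> (s b)" "a' b' = \<phi> (a b)" using p(2) b by auto
    ultimately show ?thesis using inv1 assms(2) b(1) by auto
  qed
  moreover have "\<psi> r' = r" using inv1[OF assms(3)] p(3) by simp
  ultimately show ?thesis using bi unfolding y rmap_iso_def by auto
qed

lemma iso_class_eq:
  assumes "((B, s, a, r), y) \<in> rmap_iso" "\<forall>b\<in>B. s b \<in> B \<and> a b \<in> B" "r \<in> B"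
  shows "rmap_iso `` {(B, s, a, r)} = rmap_iso `` {y}"
proof
  show "rmap_iso `` {(B, s, a, r)} \<subseteq> rmap_iso `` {y}"
    using iso_trans[OF iso_sym[OF assms]] by blast
  show "rmap_iso `` {y} \<subseteq> rmap_iso `` {(B, s, a, r)}"
    using iso_trans[OF assms(1)] by blast
qed

section \<open>The bijection\<close>

definition Mw :: "nat list \<Rightarrow> rmap" where
  "Mw w = ({0..<length w}, sg w, al w, 0)"

lemma Mw_ren:
  assumes "(u, v) \<in> renaming_rel" "dow u"
  shows "Mw v = Mw u"
proof -
  obtain g where g: "inj_on g (set u)" "v = map g u" using assms(1) unfolding renaming_rel_def by auto
  show ?thesis unfolding Mw_def g(2) using ren_sg[OF g(1) assms(2)] ren_al[OF g(1) assms(2)] by simp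
qed

lemma Mw_in:
  assumes "good w" "length w = 2 * m" "1 \<le> m"
  shows "Mw w \<in> rooted_loopless_maps m"
  using Mw_is_map[OF assms(1)] Mw_loopless[OF assms(1)] Mw_edges[OF assms(1)] assms(2,3)
  unfolding Mw_def rooted_loopless_maps_def by auto

lemma Mw_closed:
  assumes "good w"
  shows "\<forall>b\<in>{0..<length w}. sg w b \<in> {0..<length w} \<and> al w b \<in> {0..<length w}"
  using sg_lt[OF good_dow[OF assms]] al_lt[OF good_dow[OF assms]] by auto

lemma Mw_inj:
  assumes g1: "good w1" and g2: "good w2" and l: "length w2 = length w1"
    and iso: "(Mw w1, Mw w2) \<in> rmap_iso"
  shows "(w1, w2) \<in> renaming_rel"
proof -
  let ?n = "length w1"
  obtain \<phi> where p: "bij_betw \<phi> {0..<?n} {0..<?n}"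
    "\<forall>b\<in>{0..<?n}. \<phi> (sg w1 b) = sg w2 (\<phi> b) \<and> \<phi> (al w1 b) = al w2 (\<phi> b)" "\<phi> 0 = 0"
    using iso l unfolding Mw_def rmap_iso_def by auto
  have inj: "inj_on \<phi> {0..<?n}" using p(1) unfolding bij_betw_def by auto
  have img: "\<forall>b<?n. \<phi> b < ?n" using bij_betwE[OF p(1)] by auto
  have fx: "\<forall>i<?n. \<phi> i = i"
    using inj_core[OF g1 g2 l inj img] p(2,3) by auto
  have dw: "dow w1" "dow w2" using g1 g2 good_dow by auto
  have "pa w2 i = pa w1 i" if i: "i < ?n" for i
  proof -
    have "\<phi> (al w1 i) = al w2 (\<phi> i)" using p(2) i by auto
    moreover have "al w1 i < ?n" using al_lt[OF dw(1) i] .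
    ultimately have "al w1 i = al w2 i" using fx i by auto
    then show ?thesis using i l unfolding al_def by auto
  qed
  then show ?thesis using pa_eq_ren[OF dw l] by auto
qed

lemma enc_bij:
  assumes "enc B s a w f"
  shows "bij_betw f B {0..<length w}"
proof -
  have i: "inj_on f B" and s: "f ` B \<subseteq> {0..<length w}" and c: "card B = length w"
    using assms unfolding enc_def by auto
  have "card (f ` B) = card {0..<length w}" using card_image[OF i] c by simp
  then have "f ` B = {0..<length w}" using card_subset_eq[OF _ s] by simp
  then show ?thesis using i unfolding bij_betw_def by simp
qed

theorem lemma16:
  fixes m :: nat
  shows "(m = 0 \<longrightarrow> card (dow_classes 0) = 1) \<and>
         (m \<ge> 1 \<longrightarrow> (\<exists>f. bij_betw f (dow_classes m) (rooted_loopless_map_classes m)))"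
proof (intro conjI impI)
  have gd: "{w. dow w \<and> length w = 2 * m' \<and> dominating w (sinks w)} = {w. good w \<and> length w = 2 * m'}" for m'
    unfolding good_def by auto
  show "card (dow_classes 0) = 1"
  proof -
    have "{w. good w \<and> length w = 2 * 0} = {[]}" using good_Nil by auto
    then have "dow_classes 0 = {renaming_rel `` {[]}}" unfolding dow_classes_def gd quotient_def by auto
    then show ?thesis by simp
  qed
  assume m1: "1 \<le> m"
  let ?A = "dow_classes m" and ?M = "rooted_loopless_map_classes m"
  define F where "F C = rmap_iso `` {Mw (SOME w. w \<in> C)}" for C
  have A: "?A = {w. good w \<and> length w = 2 * m} // renaming_rel" unfolding dow_classes_def gd ..
  have repF: "F C = rmap_iso `` {Mw w0}" if "good w0" "C = renaming_rel `` {w0}" for C w0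
  proof -
    have "w0 \<in> C" using that ren_refl by auto
    then have "(SOME w. w \<in> C) \<in> C" by (rule someI)
    then have "(w0, SOME w. w \<in> C) \<in> renaming_rel" using that by auto
    then have "Mw (SOME w. w \<in> C) = Mw w0" using Mw_ren good_dow[OF that(1)] by blast
    then show ?thesis unfolding F_def by simp
  qed
  have inA: "C \<in> ?A \<longleftrightarrow> (\<exists>w0. good w0 \<and> length w0 = 2 * m \<and> C = renaming_rel `` {w0})" for C
    unfolding A quotient_def by auto
  have "inj_on F ?A"
  proof (rule inj_onI)
    fix C1 C2 assume c1: "C1 \<in> ?A" and c2: "C2 \<in> ?A" and e: "F C1 = F C2"
    obtain w1 where w1: "good w1" "length w1 = 2 * m" "C1 = renaming_rel `` {w1}" using c1 inA by blast
    obtain w2 where w2: "good w2" "length w2 = 2 * m" "C2 = renaming_rel `` {w2}" using c2 inA by blast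
    have "rmap_iso `` {Mw w1} = rmap_iso `` {Mw w2}" using e repF w1 w2 by simp
    moreover have "Mw w2 \<in> rmap_iso `` {Mw w2}" unfolding Mw_def using iso_refl by auto
    ultimately have "(Mw w1, Mw w2) \<in> rmap_iso" by auto
    then have "(w1, w2) \<in> renaming_rel" using Mw_inj w1 w2 by auto
    then show "C1 = C2" using ren_class_eq w1 w2 by simp
  qed
  moreover have "F ` ?A = ?M"
  proof
    show "F ` ?A \<subseteq> ?M"
    proof
      fix D assume "D \<in> F ` ?A"
      then obtain C where C: "C \<in> ?A" "D = F C" by auto
      obtain w0 where w0: "good w0" "length w0 = 2 * m" "C = renaming_rel `` {w0}" using C(1) inA by blast
      have "D = rmap_iso `` {Mw w0}" using repF w0 C by simp
      then show "D \<in> ?M" unfolding rooted_loopless_map_classes_def quotient_def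
        using Mw_in[OF w0(1,2) m1] by auto
    qed
    show "?M \<subseteq> F ` ?A"
    proof
      fix D assume "D \<in> ?M"
      then obtain x where x: "x \<in> rooted_loopless_maps m" "D = rmap_iso `` {x}"
        unfolding rooted_loopless_map_classes_def quotient_def by auto
      obtain B s a r where xd: "x = (B, s, a, r)" by (cases x) auto
      have im: "is_map B s a" and rB: "r \<in> B" and lp: "loopless B s a" and ce: "card (map_edges B a) = m"
        using x(1) unfolding xd rooted_loopless_maps_def by auto
      have "card (map_edges B a) * 2 = card B"
        using edges_card[of B a] mfin[OF im] minv[OF im] min[OF im] by blast
      then have cB: "card B = 2 * m" using ce by simp
      obtain w f where wf: "good w" "enc B s a w f" "f r = 0"
        using encode[rule_format, OF im lp rB refl] by blast
      have lw: "length w = 2 * m" using wf(2) cB unfolding enc_def by auto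
      have bij: "bij_betw f B {0..<length w}" using enc_bij[OF wf(2)] .
      have "(x, Mw w) \<in> rmap_iso"
        using bij wf(2,3) unfolding xd Mw_def rmap_iso_def enc_def by auto
      then have "D = rmap_iso `` {Mw w}" using iso_class_eq[of B s a r] min[OF im] rB x(2) xd by auto
      moreover have "renaming_rel `` {w} \<in> ?A" using inA wf(1) lw by blast
      moreover have "F (renaming_rel `` {w}) = rmap_iso `` {Mw w}" using repF wf(1) by simp
      ultimately show "D \<in> F ` ?A" by auto
    qed
  qed
  ultimately show "\<exists>f. bij_betw f ?A ?M" unfolding bij_betw_def by blast
qed


end
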